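(* Fix a time $t$ and let $r>0$. There exists an integer $n_o(r)>0$ such that for every integer $n\ge n_o(r)$ and every $v\in X_r$, the equation $$\sqrt n\,u-\frac{1}{p^0}Q(u,u)=v$$ has a unique solution $u_n\in X_r$.
   Context: $a,b$ are given regular positive functions of $t$ with $a(t)>C_o$, $b(t)>C_o$ ($C_o>0$). For $\bar p=(p^1,p^2,p^3),\bar q\in\mathbb{R}^3$: $\bar p\cdot\bar q=a^2(t)p^1q^1+b^2(t)(p^2q^2+p^3q^3)$, $|\bar p|^2=\bar p\cdot\bar p$, $p^0=\sqrt{1+|\bar p|^2}$, $q^0=\sqrt{1+|\bar q|^2}$, $\hat{\bar p}=\bar p/p^0$, $e=p^0+q^0$; for $\omega\in S^2$, $C(\bar p,\bar q,\omega)=\dfrac{2p^0q^0e\,\omega\cdot(\hat{\bar q}-\hat{\bar p})}{e^2-[\omega\cdot(\bar p+\bar q)]^2}$, $\bar p'=\bar p+C\omega$, $\bar q'=\bar q-C\omega$. The kernel $S(a(t),b(t),\bar p,\bar q,\bar p',\bar q')$ satisfies $0\le S\le C_1$ and $S(a,b,\bar p,\bar q,\bar p',\bar q')=S(a,b,\bar p',\bar q',\bar p,\bar q)$. $Q^+(f,g)(\bar p)=\int_{\mathbb{R}^3}\frac{a(t)b^2(t)}{q^0}d\bar q\int_{S^2}f(\bar p')g(\bar q')S\,d\omega$, $Q^-(f,g)(\bar p)=\int_{\mathbb{R}^3}\frac{a(t)b^2(t)}{q^0}d\bar q\int_{S^2}f(\bar p)g(\bar q)S\,d\omega$, $Q=Q^+-Q^-$.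 $\|\cdot\|$ is the $L^1(\mathbb{R}^3)$ norm and $X_r=\{f\in L^1(\mathbb{R}^3): f\ge0\text{ a.e.},\ \|f\|\le r\}$. *)

theory Defs
  imports "HOL-Analysis.Analysis"
begin

type_synonym vec3 = "real ^ 3"

definition dotm :: "real \<Rightarrow> real \<Rightarrow> vec3 \<Rightarrow> vec3 \<Rightarrow> real" where
  "dotm a b p q = a\<^sup>2 * (p $ 1) * (q $ 1) + b\<^sup>2 * ((p $ 2) * (q $ 2) + (p $ 3) * (q $ 3))"

definition nrm2 :: "real \<Rightarrow> real \<Rightarrow> vec3 \<Rightarrow> real" where
  "nrm2 a b p = dotm a b p p"

definition p0 :: "real \<Rightarrow> real \<Rightarrow> vec3 \<Rightarrow> real" where
  "p0 a b p = sqrt (1 + nrm2 a b p)"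

definition hat :: "real \<Rightarrow> real \<Rightarrow> vec3 \<Rightarrow> vec3" where
  "hat a b p = (1 / p0 a b p) *\<^sub>R p"

definition Ccoll :: "real \<Rightarrow> real \<Rightarrow> vec3 \<Rightarrow> vec3 \<Rightarrow> vec3 \<Rightarrow> real" where
  "Ccoll a b p q w =
     (let e = p0 a b p + p0 a b q in
      2 * p0 a b p * p0 a b q * e * dotm a b w (hat a b q - hat a b p)
        / (e\<^sup>2 - (dotm a b w (p + q))\<^sup>2))"

definition pprime :: "real \<Rightarrow> real \<Rightarrow> vec3 \<Rightarrow> vec3 \<Rightarrow> vec3 \<Rightarrow> vec3" where
  "pprime a b p q w = p + Ccoll a b p q w *\<^sub>R w"

definition qprime :: "real \<Rightarrow> real \<Rightarrow> vec3 \<Rightarrow> vec3 \<Rightarrow> vec3 \<Rightarrow> vec3" where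
  "qprime a b p q w = q - Ccoll a b p q w *\<^sub>R w"

text \<open>Points of S^2 are unit vectors for the metric scalar product dotm a b.  They are
  parametrised by the standard Euclidean unit sphere via an orthonormal frame,
  n = (sin th cos ph, sin th sin ph, cos th) gives
  omega = (n1/a, n2/b, n3/b), and d omega is the standard surface measure
  sin th d th d ph.\<close>
definition sph :: "real \<Rightarrow> real \<Rightarrow> real \<Rightarrow> real \<Rightarrow> vec3" where
  "sph a b th ph = vector [sin th * cos ph / a, sin th * sin ph / b, cos th / b]"

definition sphere_int :: "real \<Rightarrow> real \<Rightarrow> (vec3 \<Rightarrow> real) \<Rightarrow> real" where
  "sphere_int a b g =
     (LINT th:{0..pi}|lborel. (LINT ph:{0..2*pi}|lborel. sin th * g (sph a b th ph)))"

type_synonym kernel = "real \<Rightarrow> real \<Rightarrow> vec3 \<Rightarrow> vec3 \<Rightarrow> vec3 \<Rightarrow> vec3 \<Rightarrow> real"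

definition Qplus :: "kernel \<Rightarrow> real \<Rightarrow> real \<Rightarrow> (vec3 \<Rightarrow> real) \<Rightarrow> (vec3 \<Rightarrow> real) \<Rightarrow> vec3 \<Rightarrow> real" where
  "Qplus S a b f g p =
     (LINT q|lborel. (a * b\<^sup>2 / p0 a b q) *
        sphere_int a b (\<lambda>w. f (pprime a b p q w) * g (qprime a b p q w)
                              * S a b p q (pprime a b p q w) (qprime a b p q w)))"

definition Qminus :: "kernel \<Rightarrow> real \<Rightarrow> real \<Rightarrow> (vec3 \<Rightarrow> real) \<Rightarrow> (vec3 \<Rightarrow> real) \<Rightarrow> vec3 \<Rightarrow> real" where
  "Qminus S a b f g p =
     (LINT q|lborel. (a * b\<^sup>2 / p0 a b q) *
        sphere_int a b (\<lambda>w. f p * g q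
                              * S a b p q (pprime a b p q w) (qprime a b p q w)))"

definition Qcoll :: "kernel \<Rightarrow> real \<Rightarrow> real \<Rightarrow> (vec3 \<Rightarrow> real) \<Rightarrow> (vec3 \<Rightarrow> real) \<Rightarrow> vec3 \<Rightarrow> real" where
  "Qcoll S a b f g p = Qplus S a b f g p - Qminus S a b f g p"

definition L1norm :: "(vec3 \<Rightarrow> real) \<Rightarrow> real" where
  "L1norm f = (LINT p|lborel. \<bar>f p\<bar>)"

definition Xr :: "real \<Rightarrow> (vec3 \<Rightarrow> real) set" where
  "Xr r = {f. integrable lborel f \<and> (AE p in lborel. f p \<ge> 0) \<and> L1norm f \<le> r}"

definition solves :: "kernel \<Rightarrow> real \<Rightarrow> real \<Rightarrow> nat \<Rightarrow> (vec3 \<Rightarrow> real) \<Rightarrow> (vec3 \<Rightarrow> real) \<Rightarrow> bool" where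
  "solves S a b n v u \<longleftrightarrow>
     (AE p in lborel. sqrt (real n) * u p - Qcoll S a b u u p / p0 a b p = v p)"

end

theory Submission
  imports Defs
begin

lemma dotm_sym: "dotm A B p q = dotm A B q p"
  by (simp add: dotm_def algebra_simps)
lemma dotm_add_right: "dotm A B w (p + q) = dotm A B w p + dotm A B w q"
  by (simp add: dotm_def algebra_simps)
lemma dotm_diff_right: "dotm A B w (p - q) = dotm A B w p - dotm A B w q"
  by (simp add: dotm_def algebra_simps)
lemma dotm_scaleR_right: "dotm A B w (c *\<^sub>R q) = c * dotm A B w q"
  by (simp add: dotm_def algebra_simps)
lemma dotm_add_left: "dotm A B (p + q) w = dotm A B p w + dotm A B q w"
  by (simp add: dotm_def algebra_simps)
lemma dotm_diff_left: "dotm A B (p - q) w = dotm A B p w - dotm A B q w"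
  by (simp add: dotm_def algebra_simps)
lemma dotm_scaleR_left: "dotm A B (c *\<^sub>R q) w = c * dotm A B q w"
  by (simp add: dotm_def algebra_simps)
lemma dotm_minus_right: "dotm A B w (- q) = - dotm A B w q"
  by (simp add: dotm_def algebra_simps)
lemma dotm_minus_left: "dotm A B (- q) w = - dotm A B q w"
  by (simp add: dotm_def algebra_simps)

lemmas dotm_lin = dotm_add_right dotm_diff_right dotm_scaleR_right dotm_add_left dotm_diff_left
  dotm_scaleR_left dotm_minus_right dotm_minus_left

lemma nrm2_nonneg: "0 \<le> nrm2 A B p"
proof -
  have "nrm2 A B p = (A*p$1)\<^sup>2 + (B*p$2)\<^sup>2 + (B*p$3)\<^sup>2"
    by (simp add: nrm2_def dotm_def power2_eq_square algebra_simps)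
  then show ?thesis by simp
qed

lemma p0_ge1: "1 \<le> p0 A B p"
  using nrm2_nonneg[of A B p] by (simp add: p0_def)
lemma p0_pos: "0 < p0 A B p"
  using p0_ge1[of A B p] by linarith
lemma p0_sq: "(p0 A B p)\<^sup>2 = 1 + nrm2 A B p"
  using nrm2_nonneg[of A B p] by (simp add: p0_def)

lemma cs3: "((x1::real)*y1 + x2*y2 + x3*y3)\<^sup>2 \<le> (x1\<^sup>2+x2\<^sup>2+x3\<^sup>2)*(y1\<^sup>2+y2\<^sup>2+y3\<^sup>2)"
proof -
  have "(x1\<^sup>2+x2\<^sup>2+x3\<^sup>2)*(y1\<^sup>2+y2\<^sup>2+y3\<^sup>2) - (x1*y1 + x2*y2 + x3*y3)\<^sup>2
     = (x1*y2-x2*y1)\<^sup>2 + (x1*y3-x3*y1)\<^sup>2 + (x2*y3-x3*y2)\<^sup>2"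
    by (simp add: power2_eq_square algebra_simps)
  moreover have "0 \<le> (x1*y2-x2*y1)\<^sup>2 + (x1*y3-x3*y1)\<^sup>2 + (x2*y3-x3*y2)\<^sup>2" by simp
  ultimately show ?thesis by linarith
qed

lemma dotm_cs: "(dotm A B w p)\<^sup>2 \<le> nrm2 A B w * nrm2 A B p"
proof -
  have "dotm A B w p = (A*w$1)*(A*p$1) + (B*w$2)*(B*p$2) + (B*w$3)*(B*p$3)"
    by (simp add: dotm_def power2_eq_square algebra_simps)
  moreover have "nrm2 A B w = (A*w$1)\<^sup>2 + (B*w$2)\<^sup>2 + (B*w$3)\<^sup>2"
    by (simp add: nrm2_def dotm_def power2_eq_square algebra_simps)
  moreover have "nrm2 A B p = (A*p$1)\<^sup>2 + (B*p$2)\<^sup>2 + (B*p$3)\<^sup>2"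
    by (simp add: nrm2_def dotm_def power2_eq_square algebra_simps)
  ultimately show ?thesis using cs3 by simp
qed

lemma dotm_unit_lt: assumes "nrm2 A B w = 1" shows "\<bar>dotm A B w p\<bar> < p0 A B p"
proof -
  have "(dotm A B w p)\<^sup>2 \<le> nrm2 A B p" using dotm_cs[of A B w p] assms by simp
  also have "\<dots> < (p0 A B p)\<^sup>2" by (simp add: p0_sq)
  finally have "\<bar>dotm A B w p\<bar>\<^sup>2 < (p0 A B p)\<^sup>2" by simp
  then show ?thesis using p0_pos[of A B p] by (meson abs_ge_zero power_less_imp_less_base less_le_not_le)
qed

lemma Ccoll_alt:
  "Ccoll A B p q w = 2 * (p0 A B p + p0 A B q) * (p0 A B p * dotm A B w q - p0 A B q * dotm A B w p)
      / ((p0 A B p + p0 A B q)\<^sup>2 - (dotm A B w p + dotm A B w q)\<^sup>2)"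
proof -
  have P: "p0 A B p > 0" "p0 A B q > 0" using p0_pos by auto
  have "dotm A B w (hat A B q - hat A B p) = dotm A B w q / p0 A B q - dotm A B w p / p0 A B p"
    by (simp add: hat_def dotm_lin)
  then have "2 * p0 A B p * p0 A B q * (p0 A B p + p0 A B q) * dotm A B w (hat A B q - hat A B p)
     = 2 * (p0 A B p + p0 A B q) * (p0 A B p * dotm A B w q - p0 A B q * dotm A B w p)"
  proof -
    have "p0 A B p * p0 A B q * dotm A B w (hat A B q - hat A B p) = p0 A B p * dotm A B w q - p0 A B q * dotm A B w p"
      unfolding \<open>dotm A B w (hat A B q - hat A B p) = _\<close> using P by (simp add: field_simps)
    then show ?thesis by (metis mult.commute mult.left_commute)
  qed
  then show ?thesis
    by (simp add: Ccoll_def Let_def dotm_add_right)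
qed

lemma sq_lt_abs: "\<bar>al::real\<bar> < P \<Longrightarrow> al\<^sup>2 < P\<^sup>2"
proof -
  assume h: "\<bar>al\<bar> < P"
  have "\<bar>al\<bar>^2 < P^2" by (rule power_strict_mono[OF h]) auto
  then show ?thesis by simp
qed
lemma sq_expand_aux: fixes PP QQ C al be :: real assumes "PP+QQ > 0"
  shows "(PP + C*(al+be)/(PP+QQ))\<^sup>2 - (PP\<^sup>2 + 2*C*al + C\<^sup>2)
      = C/(PP+QQ)\<^sup>2 * (2*(PP+QQ)*(PP*be - QQ*al) - C*((PP+QQ)\<^sup>2 - (al+be)\<^sup>2))"
proof -
  define E where "E = PP+QQ"
  have E: "E \<noteq> 0" using assms E_def by simp
  have "(PP + C*(al+be)/E)\<^sup>2 - (PP\<^sup>2 + 2*C*al + C\<^sup>2)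
      = C/E\<^sup>2 * (2*E*(PP*be - QQ*al) - C*(E\<^sup>2 - (al+be)\<^sup>2))"
    using E apply (simp add: field_simps power2_eq_square)
    unfolding E_def by (simp add: algebra_simps)
  then show ?thesis by (simp add: E_def)
qed

lemma pos_aux:
  fixes P Q al be :: real
  assumes "P > 0" "Q > 0" "\<bar>al\<bar> < P" "\<bar>be\<bar> < Q"
  shows "P * ((P+Q)\<^sup>2 - (al+be)\<^sup>2) + 2*(al+be)*(P*be - Q*al) > 0"
proof -
  have eq: "P * ((P+Q)\<^sup>2 - (al+be)\<^sup>2) + 2*(al+be)*(P*be - Q*al)
      = P*(P+Q)\<^sup>2 + P*be\<^sup>2 - (P+2*Q)*al\<^sup>2 - 2*Q*al*be"
    by (simp add: power2_eq_square algebra_simps)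
  have "al\<^sup>2 < P\<^sup>2" using assms by (simp add: sq_lt_abs)
  then have 1: "(P+2*Q)*al\<^sup>2 < (P+2*Q)*P\<^sup>2" using assms by simp
  have "al*be \<le> \<bar>al\<bar>*\<bar>be\<bar>" by (metis abs_ge_self abs_mult)
  also have "\<dots> \<le> P*\<bar>be\<bar>" using assms by (simp add: mult_right_mono)
  finally have 2: "Q*(al*be) \<le> Q*(P*\<bar>be\<bar>)" using assms by simp
  have 3: "0 \<le> P*(Q-\<bar>be\<bar>)\<^sup>2" using assms by simp
  have 4: "P*(Q-\<bar>be\<bar>)\<^sup>2 = P*Q\<^sup>2 + P*be\<^sup>2 - 2*Q*(P*\<bar>be\<bar>)"
    by (simp add: power2_eq_square algebra_simps)
  show ?thesis unfolding eq using 1 2 3 4 by (simp add: power2_eq_square algebra_simps)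
qed

locale collw =
  fixes A B :: real and w :: vec3
  assumes A_pos: "A > 0" and B_pos: "B > 0" and w_unit: "nrm2 A B w = 1"
begin

abbreviation "P \<equiv> p0 A B"
abbreviation "dt \<equiv> dotm A B"

lemma al_lt: "\<bar>dt w p\<bar> < P p" by (rule dotm_unit_lt[OF w_unit])

lemma D_pos: "(P p + P q)\<^sup>2 - (dt w p + dt w q)\<^sup>2 > 0"
proof -
  have "\<bar>dt w p + dt w q\<bar> < P p + P q" using al_lt[of p] al_lt[of q] by linarith
  then show ?thesis using sq_lt_abs by simp
qed

lemma nrm2_add_scale: "nrm2 A B (p + c *\<^sub>R w) = nrm2 A B p + 2*c*dt w p + c\<^sup>2"
  using w_unit by (simp add: nrm2_def dotm_lin dotm_sym[of A B w p] power2_eq_square algebra_simps)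

lemma nrm2_diff_scale: "nrm2 A B (p - c *\<^sub>R w) = nrm2 A B p - 2*c*dt w p + c\<^sup>2"
  using w_unit by (simp add: nrm2_def dotm_lin dotm_sym[of A B w p] power2_eq_square algebra_simps)

lemma C_eq: "Ccoll A B p q w * ((P p + P q)\<^sup>2 - (dt w p + dt w q)\<^sup>2)
    = 2 * (P p + P q) * (P p * dt w q - P q * dt w p)"
  using D_pos[of p q] by (simp add: Ccoll_alt)

lemma p0_pprime: "P (pprime A B p q w) = P p + Ccoll A B p q w * (dt w p + dt w q) / (P p + P q)"
proof -
  define C where "C = Ccoll A B p q w"
  define al where "al = dt w p"
  define be where "be = dt w q"
  define PP where "PP = P p"
  define QQ where "QQ = P q"
  have PP: "PP > 0" "QQ > 0" using p0_pos unfolding PP_def QQ_def by auto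
  have ab: "\<bar>al\<bar> < PP" "\<bar>be\<bar> < QQ" unfolding al_def be_def PP_def QQ_def using al_lt by auto
  have D: "(PP+QQ)\<^sup>2 - (al+be)\<^sup>2 > 0" unfolding al_def be_def PP_def QQ_def by (rule D_pos)
  have Ce: "C * ((PP+QQ)\<^sup>2 - (al+be)\<^sup>2) = 2*(PP+QQ)*(PP*be - QQ*al)"
    unfolding C_def al_def be_def PP_def QQ_def by (rule C_eq)
  have sq: "1 + nrm2 A B (pprime A B p q w) = PP\<^sup>2 + 2*C*al + C\<^sup>2"
    by (simp add: pprime_def nrm2_add_scale PP_def p0_sq C_def al_def)
  have Cdef: "C = 2*(PP+QQ)*(PP*be - QQ*al) / ((PP+QQ)\<^sup>2 - (al+be)\<^sup>2)" using Ce D by (simp add: field_simps)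
  have pos: "PP + C*(al+be)/(PP+QQ) > 0"
  proof -
    have "PP + C*(al+be)/(PP+QQ) = (PP * ((PP+QQ)\<^sup>2 - (al+be)\<^sup>2) + 2*(al+be)*(PP*be - QQ*al)) / ((PP+QQ)\<^sup>2 - (al+be)\<^sup>2)"
    proof -
      have gen: "\<And>E Dv N. E > 0 \<Longrightarrow> Dv > 0 \<Longrightarrow> PP + (2*E*N/Dv)*(al+be)/E = (PP*Dv + 2*(al+be)*N)/Dv"
        by (simp add: field_simps)
      show ?thesis unfolding Cdef by (rule gen) (use PP D in auto)
    qed
    then show ?thesis using pos_aux[OF PP ab] D by simp
  qed
  have "(PP + C*(al+be)/(PP+QQ))\<^sup>2 = PP\<^sup>2 + 2*C*al + C\<^sup>2"
  proof -
    have "(PP + C*(al+be)/(PP+QQ))\<^sup>2 - (PP\<^sup>2 + 2*C*al + C\<^sup>2)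
      = C/(PP+QQ)\<^sup>2 * (2*(PP+QQ)*(PP*be - QQ*al) - C*((PP+QQ)\<^sup>2 - (al+be)\<^sup>2))"
      using PP by (intro sq_expand_aux) simp
    also have "\<dots> = 0" using Ce by simp
    finally show ?thesis by simp
  qed
  then have "P (pprime A B p q w) = sqrt ((PP + C*(al+be)/(PP+QQ))\<^sup>2)"
    by (simp add: p0_def sq)
  also have "\<dots> = PP + C*(al+be)/(PP+QQ)" using pos by simp
  finally show ?thesis unfolding C_def al_def be_def PP_def QQ_def .
qed

end

lemma jac_alg:
  fixes P Q al be :: real
  assumes P: "P > 0" and Q: "Q > 0" and D: "(P+Q)\<^sup>2 - (al+be)\<^sup>2 > 0"
  defines "E \<equiv> P + Q" and "Dv \<equiv> (P+Q)\<^sup>2 - (al+be)\<^sup>2" and "N \<equiv> P*be - Q*al"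
  defines "C \<equiv> 2*E*N/Dv"
  defines "E' \<equiv> al/P - be/Q" and "N' \<equiv> al*be/P + al*be/Q - P - Q"
  shows "1 + ((2*E'*N + 2*E*N')/Dv - 2*E*N*(2*E*E')/Dv\<^sup>2) = - ((P + C*(al+be)/E) * (Q - C*(al+be)/E)) / (P*Q)"
proof -
  have E: "E > 0" using P Q E_def by simp
  have Dv: "Dv > 0" using D Dv_def by simp
  have "(1 + ((2*E'*N + 2*E*N')/Dv - 2*E*N*(2*E*E')/Dv\<^sup>2)) * (P*Q*Dv\<^sup>2)
     = (Dv\<^sup>2*P*Q + (2*(al*Q - be*P)*N + 2*E*(al*be*(P+Q) - P*Q*(P+Q)))*Dv - 4*E*E*N*(al*Q-be*P))"
    using P Q Dv unfolding E'_def N'_def by (simp add: field_simps power2_eq_square)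
  also have "\<dots> = - ((P*Dv + 2*N*(al+be)) * (Q*Dv - 2*N*(al+be)))"
    unfolding Dv_def N_def E_def by (simp add: power2_eq_square algebra_simps)
  also have "\<dots> = - ((P + C*(al+be)/E) * (Q - C*(al+be)/E)) / (P*Q) * (P*Q*Dv\<^sup>2)"
    using P Q Dv E unfolding C_def by (simp add: field_simps power2_eq_square)
  finally have "(1 + ((2*E'*N + 2*E*N')/Dv - 2*E*N*(2*E*E')/Dv\<^sup>2)) * (P*Q*Dv\<^sup>2)
     = - ((P + C*(al+be)/E) * (Q - C*(al+be)/E)) / (P*Q) * (P*Q*Dv\<^sup>2)" .
  then show ?thesis using P Q Dv by (subst (asm) mult_cancel_right) simp
qed

lemma has_derivative_dotm[derivative_intros]:
  assumes "(f has_derivative f') (at x within S)" "(g has_derivative g') (at x within S)"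
  shows "((\<lambda>x. dotm A B (f x) (g x)) has_derivative
           (\<lambda>h. dotm A B (f' h) (g x) + dotm A B (f x) (g' h))) (at x within S)"
proof -
  have d: "\<And>i. ((\<lambda>x. f x $ i) has_derivative (\<lambda>h. f' h $ i)) (at x within S)"
          "\<And>i. ((\<lambda>x. g x $ i) has_derivative (\<lambda>h. g' h $ i)) (at x within S)"
    using bounded_linear.has_derivative[OF bounded_linear_vec_nth assms(1)]
      bounded_linear.has_derivative[OF bounded_linear_vec_nth assms(2)] by auto
  show ?thesis unfolding dotm_def
    by (auto intro!: derivative_eq_intros d simp: algebra_simps)
qed

lemma has_derivative_p0[derivative_intros]:
  assumes "(f has_derivative f') (at x within S)"
  shows "((\<lambda>x. p0 A B (f x)) has_derivative (\<lambda>h. dotm A B (f x) (f' h) / p0 A B (f x))) (at x within S)"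
proof -
  have pos: "0 < 1 + nrm2 A B (f x)" using nrm2_nonneg[of A B "f x"] by simp
  have "((\<lambda>x. sqrt (1 + nrm2 A B (f x))) has_derivative (\<lambda>h. (0 + (dotm A B (f' h) (f x) + dotm A B (f x) (f' h))) * (inverse (sqrt (1 + nrm2 A B (f x))) / 2))) (at x within S)"
  proof (rule has_derivative_real_sqrt[where g="\<lambda>x. 1 + nrm2 A B (f x)", OF pos])
    show "((\<lambda>x. 1 + nrm2 A B (f x)) has_derivative (\<lambda>h. 0 + (dotm A B (f' h) (f x) + dotm A B (f x) (f' h)))) (at x within S)"
      unfolding nrm2_def by (intro has_derivative_add has_derivative_const has_derivative_dotm assms)
  qed
  then show ?thesis unfolding p0_def
    by (rule has_derivative_eq_rhs) (simp add: fun_eq_iff dotm_sym[of A B "f' _" "f x"] field_simps)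
qed

lemma Ccoll_swap: "Ccoll A B q p w = - Ccoll A B p q w"
proof -
  have g: "\<And>D1 D2 n1 n2::real. D1 = D2 \<Longrightarrow> n1 = - n2 \<Longrightarrow> n1/D1 = -(n2/D2)" by simp
  show ?thesis unfolding Ccoll_alt by (rule g) (simp_all add: algebra_simps)
qed
lemma qprime_eq: "qprime A B p q w = pprime A B q p w"
  by (simp add: qprime_def pprime_def Ccoll_swap[of A B q p w])

lemma det_rank1:
  fixes w :: vec3 and l :: "vec3 \<Rightarrow> real"
  assumes l: "linear l"
  shows "det (matrix (\<lambda>h. h + l h *\<^sub>R w)) = 1 + l w"
proof -
  have "w = (\<Sum>i\<in>UNIV. (w$i) *s axis i 1)" by (simp add: basis_expansion)
  then have "l w = l (\<Sum>i\<in>UNIV. (w$i) *\<^sub>R axis i 1)" by (simp add: scalar_mult_eq_scaleR)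
  also have "\<dots> = (\<Sum>i\<in>UNIV. (w$i) * l (axis i 1))"
    using l by (simp add: linear_sum linear_scale)
  finally have lw: "l w = w$1 * l (axis 1 1) + w$2 * l (axis 2 1) + w$3 * l (axis 3 1)"
    by (simp add: sum_3)
  show ?thesis unfolding det_3 lw
    by (simp add: matrix_def axis_def algebra_simps)
qed

lemma prime_N_aux:
  fixes PP QQ C al be :: real
  assumes "PP + QQ \<noteq> 0"
  shows "(PP + C*(al+be)/(PP+QQ)) * (be - C) - (QQ - C*(al+be)/(PP+QQ)) * (al + C)
       = (PP*be - QQ*al) - C * ((PP+QQ)\<^sup>2 - (al+be)\<^sup>2) / (PP+QQ)"
proof -
  define E where "E = PP + QQ"
  have E: "E \<noteq> 0" using assms E_def by simp
  have "(PP + C*(al+be)/E) * (be - C) - (QQ - C*(al+be)/E) * (al + C)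
       = (PP*be - QQ*al) - C*(PP+QQ) + C*(al+be)\<^sup>2/E"
    using E by (simp add: field_simps power2_eq_square)
  also have "\<dots> = (PP*be - QQ*al) - C * (E\<^sup>2 - (al+be)\<^sup>2) / E"
    using E unfolding E_def[symmetric] by (simp add: field_simps power2_eq_square)
  finally show ?thesis unfolding E_def .
qed

context collw begin

lemma dt_pprime: "dt w (pprime A B p q w) = dt w p + Ccoll A B p q w"
  using w_unit by (simp add: pprime_def dotm_lin nrm2_def)
lemma dt_qprime: "dt w (qprime A B p q w) = dt w q - Ccoll A B p q w"
  using w_unit by (simp add: qprime_def dotm_lin nrm2_def)

lemma p0_qprime: "P (qprime A B p q w) = P q - Ccoll A B p q w * (dt w p + dt w q) / (P p + P q)"
proof -
  have "P (qprime A B p q w) = P q + Ccoll A B q p w * (dt w q + dt w p) / (P q + P p)"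
    unfolding qprime_eq by (rule p0_pprime)
  also have "\<dots> = P q - Ccoll A B p q w * (dt w p + dt w q) / (P p + P q)"
    by (simp only: Ccoll_swap[of A B q p w]) (simp add: add.commute)
  finally show ?thesis .
qed

lemma Ccoll_prime: "Ccoll A B (pprime A B p q w) (qprime A B p q w) w = - Ccoll A B p q w"
proof -
  define C where "C = Ccoll A B p q w"
  define al where "al = dt w p"
  define be where "be = dt w q"
  define PP where "PP = P p"
  define QQ where "QQ = P q"
  have PP: "PP > 0" "QQ > 0" using p0_pos unfolding PP_def QQ_def by auto
  have D: "(PP+QQ)\<^sup>2 - (al+be)\<^sup>2 > 0" unfolding al_def be_def PP_def QQ_def by (rule D_pos)
  have Ce: "C * ((PP+QQ)\<^sup>2 - (al+be)\<^sup>2) = 2*(PP+QQ)*(PP*be - QQ*al)"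
    unfolding C_def al_def be_def PP_def QQ_def by (rule C_eq)
  have e1: "P (pprime A B p q w) = PP + C*(al+be)/(PP+QQ)"
    unfolding p0_pprime C_def al_def be_def PP_def QQ_def ..
  have e2: "P (qprime A B p q w) = QQ - C*(al+be)/(PP+QQ)"
    unfolding p0_qprime C_def al_def be_def PP_def QQ_def ..
  have sum: "P (pprime A B p q w) + P (qprime A B p q w) = PP + QQ" using e1 e2 by simp
  have sig: "dt w (pprime A B p q w) + dt w (qprime A B p q w) = al + be"
    by (simp add: dt_pprime dt_qprime al_def be_def)
  have N: "P (pprime A B p q w) * dt w (qprime A B p q w) - P (qprime A B p q w) * dt w (pprime A B p q w)
        = - (PP*be - QQ*al)"
  proof -
    have "P (pprime A B p q w) * dt w (qprime A B p q w) - P (qprime A B p q w) * dt w (pprime A B p q w)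
       = (PP + C*(al+be)/(PP+QQ)) * (be - C) - (QQ - C*(al+be)/(PP+QQ)) * (al + C)"
      by (simp add: e1 e2 dt_pprime dt_qprime al_def be_def C_def)
    also have "\<dots> = (PP*be - QQ*al) - C * ((PP+QQ)\<^sup>2 - (al+be)\<^sup>2) / (PP+QQ)"
      using PP by (intro prime_N_aux) simp
    also have "\<dots> = (PP*be - QQ*al) - 2*(PP+QQ)*(PP*be - QQ*al) / (PP+QQ)" unfolding Ce ..
    also have "\<dots> = - (PP*be - QQ*al)"
    proof -
      have "PP + QQ \<noteq> 0" using PP by simp
      then have h: "2*(PP+QQ)*(PP*be - QQ*al) / (PP+QQ) = 2*(PP*be - QQ*al)" by (simp add: field_simps)
      show ?thesis by (simp only: h) (simp add: algebra_simps)
    qed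
    finally show ?thesis .
  qed
  have "Ccoll A B (pprime A B p q w) (qprime A B p q w) w
     = 2 * (PP + QQ) * (- (PP*be - QQ*al)) / ((PP+QQ)\<^sup>2 - (al+be)\<^sup>2)"
    unfolding Ccoll_alt sum sig N ..
  also have "\<dots> = - C" using Ce D by (simp add: field_simps)
  finally show ?thesis unfolding C_def .
qed

lemma pprime_invol: "pprime A B (pprime A B p q w) (qprime A B p q w) w = p"
  unfolding pprime_def[of A B "pprime A B p q w"] Ccoll_prime by (simp add: pprime_def)
lemma qprime_invol: "qprime A B (pprime A B p q w) (qprime A B p q w) w = q"
  unfolding qprime_def[of A B "pprime A B p q w"] Ccoll_prime by (simp add: qprime_def)

end

lemma cov_invol_nn:
  fixes tau :: "vec3 \<Rightarrow> vec3" and tau' :: "vec3 \<Rightarrow> vec3 \<Rightarrow> vec3" and f :: "vec3 \<Rightarrow> real"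
  assumes inv: "\<And>x. tau (tau x) = x"
    and der: "\<And>x. (tau has_derivative tau' x) (at x)"
    and fm: "f \<in> borel_measurable borel" and f0: "\<And>x. 0 \<le> f x"
    and Dm: "(\<lambda>x. \<bar>det (matrix (tau' x))\<bar> * f (tau x)) \<in> borel_measurable borel"
  shows "(\<integral>\<^sup>+x. ennreal (\<bar>det (matrix (tau' x))\<bar> * f (tau x)) \<partial>lborel) = (\<integral>\<^sup>+x. ennreal (f x) \<partial>lborel)"
proof -
  let ?D = "\<lambda>x. \<bar>det (matrix (tau' x))\<bar> * f (tau x)"
  have D0: "\<And>x. 0 \<le> ?D x" using f0 by simp
  have idd: "tau' (tau y) \<circ> tau' y = id" for y
  proof -
    have "((tau \<circ> tau) has_derivative (tau' (tau y) \<circ> tau' y)) (at y)"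
      by (rule diff_chain_at[OF der der])
    moreover have "tau \<circ> tau = id" using inv by (simp add: fun_eq_iff)
    ultimately have "((\<lambda>x. x) has_derivative (tau' (tau y) \<circ> tau' y)) (at y)" by (simp add: id_def)
    moreover have "((\<lambda>x. x) has_derivative id) (at y)" by (simp add: id_def)
    ultimately show ?thesis using has_derivative_unique by blast
  qed
  have idd2: "tau' y \<circ> tau' (tau y) = id" for y using idd[of "tau y"] inv by simp
  have L: "\<And>b. (f integrable_on UNIV \<and> integral UNIV f \<le> b) \<longleftrightarrow>
             (?D integrable_on UNIV \<and> integral UNIV ?D \<le> b)"
    by (rule cov_invertible_nonneg_le[where h=tau and h'=tau']) (use der f0 inv idd2 in auto)
  show ?thesis
  proof (cases "(\<integral>\<^sup>+x. ennreal (f x) \<partial>lborel) < \<infinity>")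
    case True
    have fi: "f integrable_on UNIV" by (rule nn_integral_integrable_on[OF fm f0 True])
    have fe: "(\<integral>\<^sup>+x. ennreal (f x) \<partial>lborel) = integral UNIV f"
      by (rule nn_integral_lborel_eq_integral[OF fm f0 True])
    from L[of "integral UNIV f"] fi have Di: "?D integrable_on UNIV" and le1: "integral UNIV ?D \<le> integral UNIV f" by auto
    from L[of "integral UNIV ?D"] Di have le2: "integral UNIV f \<le> integral UNIV ?D" by auto
    have "(\<integral>\<^sup>+x. ennreal (?D x) \<partial>lborel) = integral UNIV ?D"
      by (rule nn_integral_has_integral_lborel[OF Dm D0]) (use Di in \<open>simp add: integrable_integral\<close>)
    then show ?thesis using fe le1 le2 by simp
  next
    case False
    then have finf: "(\<integral>\<^sup>+x. ennreal (f x) \<partial>lborel) = \<infinity>" by (simp add: less_top[symmetric])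
    show ?thesis
    proof (rule ccontr)
      assume ne: "(\<integral>\<^sup>+x. ennreal (?D x) \<partial>lborel) \<noteq> (\<integral>\<^sup>+x. ennreal (f x) \<partial>lborel)"
      then have "(\<integral>\<^sup>+x. ennreal (?D x) \<partial>lborel) < \<infinity>" using finf by (simp add: top.not_eq_extremum)
      then have Di: "?D integrable_on UNIV" by (rule nn_integral_integrable_on[OF Dm D0])
      from L[of "integral UNIV ?D"] Di have fi: "f integrable_on UNIV" by auto
      have "(\<integral>\<^sup>+x. ennreal (f x) \<partial>lborel) = integral UNIV f"
        by (rule nn_integral_has_integral_lborel[OF fm f0]) (use fi in \<open>simp add: integrable_integral\<close>)
      then show False using finf by simp
    qed
  qed
qed


lemma meas_vec_nth[measurable]:
  fixes f :: "'a \<Rightarrow> real^'n"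
  assumes "f \<in> borel_measurable M"
  shows "(\<lambda>x. f x $ i) \<in> borel_measurable M"
  by (rule measurable_compose[OF assms borel_measurable_continuous_onI])
     (intro continuous_on_component continuous_on_id)

lemma meas_dotm[measurable]:
  assumes [measurable]: "f \<in> borel_measurable M" "g \<in> borel_measurable M"
  shows "(\<lambda>x. dotm A B (f x) (g x)) \<in> borel_measurable M"
  unfolding dotm_def by measurable

lemma meas_p0[measurable]:
  assumes [measurable]: "f \<in> borel_measurable M"
  shows "(\<lambda>x. p0 A B (f x)) \<in> borel_measurable M"
  unfolding p0_def nrm2_def by measurable

lemma meas_hat[measurable]:
  assumes [measurable]: "f \<in> borel_measurable M"
  shows "(\<lambda>x. hat A B (f x)) \<in> borel_measurable M"
  unfolding hat_def by measurable

lemma meas_Ccoll[measurable]: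
  assumes [measurable]: "f \<in> borel_measurable M" "g \<in> borel_measurable M" "h \<in> borel_measurable M"
  shows "(\<lambda>x. Ccoll A B (f x) (g x) (h x)) \<in> borel_measurable M"
  unfolding Ccoll_def Let_def by measurable

lemma meas_pprime[measurable]:
  assumes [measurable]: "f \<in> borel_measurable M" "g \<in> borel_measurable M" "h \<in> borel_measurable M"
  shows "(\<lambda>x. pprime A B (f x) (g x) (h x)) \<in> borel_measurable M"
  unfolding pprime_def by measurable

lemma meas_qprime[measurable]:
  assumes [measurable]: "f \<in> borel_measurable M" "g \<in> borel_measurable M" "h \<in> borel_measurable M"
  shows "(\<lambda>x. qprime A B (f x) (g x) (h x)) \<in> borel_measurable M"
  unfolding qprime_def by measurable

lemma sph_eq: "sph A B th ph = (sin th * cos ph / A) *\<^sub>R axis 1 1 + (sin th * sin ph / B) *\<^sub>R axis 2 1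
    + (cos th / B) *\<^sub>R axis 3 1"
  by (simp add: sph_def vec_eq_iff forall_3 vector_3 axis_def)

lemma meas_sph[measurable]:
  assumes [measurable]: "f \<in> borel_measurable M" "g \<in> borel_measurable M"
  shows "(\<lambda>x. sph A B (f x) (g x)) \<in> borel_measurable M"
  unfolding sph_eq by measurable

lemma sph_unit: "A > 0 \<Longrightarrow> B > 0 \<Longrightarrow> nrm2 A B (sph A B th ph) = 1"
proof -
  assume "A > 0" "B > 0"
  have e: "cos th * cos th + cos ph * cos ph * sin th * sin th + sin ph * sin ph * sin th * sin th = 1"
  proof -
    have "cos th * cos th + cos ph * cos ph * sin th * sin th + sin ph * sin ph * sin th * sin th
        = cos th * cos th + (cos ph * cos ph + sin ph * sin ph) * sin th * sin th" by (simp only: algebra_simps)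
    also have "\<dots> = 1"
    proof -
      have f1: "cos ph * cos ph + sin ph * sin ph = 1" by (metis sin_cos_squared_add power2_eq_square add.commute)
      have f2: "cos th * cos th + sin th * sin th = 1" by (metis sin_cos_squared_add power2_eq_square add.commute)
      show ?thesis by (simp only: f1) (simp add: f2)
    qed
    finally show ?thesis .
  qed
  have g1: "\<And>A x::real. A \<noteq> 0 \<Longrightarrow> A\<^sup>2 * (x/A) * (x/A) = x*x" by (simp add: field_simps power2_eq_square)
  have g2: "\<And>B y z::real. B \<noteq> 0 \<Longrightarrow> B\<^sup>2 * (y/B*(y/B) + z/B*(z/B)) = y*y + z*z" by (simp add: field_simps power2_eq_square)
  have "nrm2 A B (sph A B th ph) = (sin th * cos ph) * (sin th * cos ph) + ((sin th * sin ph) * (sin th * sin ph) + cos th * cos th)"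
    unfolding nrm2_def dotm_def sph_def vector_3 using \<open>A > 0\<close> \<open>B > 0\<close> by (simp add: power2_eq_square field_simps del: sin_cos_squared_add3)
  also have "\<dots> = cos th * cos th + cos ph * cos ph * sin th * sin th + sin ph * sin ph * sin th * sin th"
    by (simp only: algebra_simps)
  finally show ?thesis using e by simp
qed

lemma dotm_zero_left[simp]: "dotm A B 0 p = 0" by (simp add: dotm_def)
lemma dotm_zero_right[simp]: "dotm A B p 0 = 0" by (simp add: dotm_def)

lemma hd_sq_minus:
  assumes "(f has_derivative f') (at x)"
  shows "((\<lambda>x. (f x)\<^sup>2 - (c::real)) has_derivative (\<lambda>h. 2 * f x * f' h)) (at x)"
  by (rule has_derivative_eq_rhs[OF has_derivative_diff[OF has_derivative_power[OF assms] has_derivative_const]])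
     (auto simp: fun_eq_iff)

lemma meas_H2:
  fixes H :: "vec3 \<Rightarrow> vec3 \<Rightarrow> 'b::topological_space" and f g :: "'a \<Rightarrow> vec3"
  assumes Hm: "(\<lambda>(x, y). H x y) \<in> borel_measurable borel"
    and [measurable]: "f \<in> borel_measurable M" "g \<in> borel_measurable M"
  shows "(\<lambda>x. H (f x) (g x)) \<in> borel_measurable M"
proof -
  have "(\<lambda>x. (\<lambda>(x, y). H x y) (f x, g x)) \<in> borel_measurable M"
    by (rule measurable_compose[OF _ Hm]) measurable
  then show ?thesis by simp
qed


lemma nn_shear:
  fixes G :: "vec3 \<Rightarrow> vec3 \<Rightarrow> ennreal"
  assumes Gm: "(\<lambda>(x, y). G x y) \<in> borel_measurable borel"
  shows "(\<integral>\<^sup>+p. (\<integral>\<^sup>+q. G p q \<partial>lborel) \<partial>lborel) = (\<integral>\<^sup>+s. (\<integral>\<^sup>+p. G p (s - p) \<partial>lborel) \<partial>lborel)"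
proof -
  note Gm' = meas_H2[OF Gm]
  have 1: "(\<integral>\<^sup>+q. G p q \<partial>lborel) = (\<integral>\<^sup>+s. G p (s - p) \<partial>lborel)" for p
  proof -
    have "(\<integral>\<^sup>+q. G p q \<partial>lborel) = (\<integral>\<^sup>+q. G p q \<partial>(distr lborel borel ((+) (-p))))"
      by (simp add: lborel_distr_plus)
    also have "\<dots> = (\<integral>\<^sup>+s. G p (-p + s) \<partial>lborel)"
      by (rule nn_integral_distr) (simp, rule Gm', rule measurable_const, simp, rule measurable_ident_sets, simp)
    finally show ?thesis by simp
  qed
  have "(\<integral>\<^sup>+p. (\<integral>\<^sup>+q. G p q \<partial>lborel) \<partial>lborel) = (\<integral>\<^sup>+p. (\<integral>\<^sup>+s. G p (s - p) \<partial>lborel) \<partial>lborel)"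
    by (simp add: 1)
  also have "\<dots> = (\<integral>\<^sup>+s. (\<integral>\<^sup>+p. G p (s - p) \<partial>lborel) \<partial>lborel)"
  proof (rule lborel_pair.Fubini'[symmetric])
    show "(\<lambda>(p, s). G p (s - p)) \<in> borel_measurable (lborel \<Otimes>\<^sub>M lborel)"
      unfolding case_prod_beta by (rule Gm') measurable
  qed
  finally show ?thesis .
qed

context collw begin

definition cdv :: "vec3 \<Rightarrow> vec3 \<Rightarrow> vec3 \<Rightarrow> real" where
  "cdv s p h = (let P1 = P p; P2 = P (s-p); al = dt w p; be = dt w (s-p); E = P1+P2;
      N = P1*be - P2*al; Dv = E\<^sup>2 - (dt w s)\<^sup>2;
      E' = dt p h / P1 - dt (s-p) h / P2;
      N' = (dt p h / P1)*be - P1 * dt w h + (dt (s-p) h / P2)*al - P2 * dt w h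
     in (2*E'*N + 2*E*N')/Dv - 2*E*N*(2*E*E')/Dv\<^sup>2)"

lemma Ccoll_s: "Ccoll A B p (s - p) w = 2*(P p + P (s-p))*(P p * dt w (s-p) - P (s-p) * dt w p)
     / ((P p + P (s-p))\<^sup>2 - (dt w s)\<^sup>2)"
  unfolding Ccoll_alt by (simp add: dotm_lin)

lemma Dv_pos: "(P p + P (s-p))\<^sup>2 - (dt w s)\<^sup>2 > 0"
  using D_pos[of p "s - p"] by (simp add: dotm_lin)

lemma c_deriv: "((\<lambda>p. Ccoll A B p (s - p) w) has_derivative cdv s p) (at p)"
proof -
  have dP1: "((\<lambda>p. P p) has_derivative (\<lambda>h. dt p h / P p)) (at p)"
    by (rule has_derivative_eq_rhs[OF has_derivative_p0[OF has_derivative_ident]]) simp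
  have dP2: "((\<lambda>p. P (s - p)) has_derivative (\<lambda>h. - dt (s-p) h / P (s-p))) (at p)"
    by (rule has_derivative_eq_rhs[OF has_derivative_p0[OF has_derivative_diff[OF has_derivative_const has_derivative_ident]]])
       (simp add: fun_eq_iff dotm_lin)
  have dA: "((\<lambda>p. dt w p) has_derivative (\<lambda>h. dt w h)) (at p)"
    by (rule has_derivative_eq_rhs[OF has_derivative_dotm[OF has_derivative_const has_derivative_ident]])
       (simp add: fun_eq_iff)
  have dB: "((\<lambda>p. dt w (s - p)) has_derivative (\<lambda>h. - dt w h)) (at p)"
    by (rule has_derivative_eq_rhs[OF has_derivative_dotm[OF has_derivative_const has_derivative_diff[OF has_derivative_const has_derivative_ident]]])
       (simp add: fun_eq_iff dotm_lin)
  let ?E' = "\<lambda>h. dt p h / P p - dt (s-p) h / P (s-p)"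
  let ?N' = "\<lambda>h. (dt p h / P p) * dt w (s-p) - P p * dt w h + (dt (s-p) h / P (s-p)) * dt w p - P (s-p) * dt w h"
  have dE: "((\<lambda>p. P p + P (s - p)) has_derivative ?E') (at p)"
    by (rule has_derivative_eq_rhs[OF has_derivative_add[OF dP1 dP2]]) (simp add: fun_eq_iff)
  have dN: "((\<lambda>p. P p * dt w (s-p) - P (s-p) * dt w p) has_derivative ?N') (at p)"
    by (rule has_derivative_eq_rhs[OF has_derivative_diff[OF has_derivative_mult[OF dP1 dB] has_derivative_mult[OF dP2 dA]]])
       (simp add: fun_eq_iff algebra_simps)
  have dF: "((\<lambda>p. 2*(P p + P (s-p))*(P p * dt w (s-p) - P (s-p) * dt w p)) has_derivative
      (\<lambda>h. 2 * ?E' h * (P p * dt w (s-p) - P (s-p) * dt w p) + 2*(P p + P (s-p)) * ?N' h)) (at p)"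
    by (rule has_derivative_eq_rhs[OF has_derivative_mult[OF has_derivative_mult[OF has_derivative_const dE] dN]])
       (simp add: fun_eq_iff algebra_simps)
  have dG: "((\<lambda>p. (P p + P (s-p))\<^sup>2 - (dt w s)\<^sup>2) has_derivative (\<lambda>h. 2*(P p + P (s-p))*?E' h)) (at p)"
    by (rule hd_sq_minus[OF dE])
  have nz: "(P p + P (s-p))\<^sup>2 - (dt w s)\<^sup>2 \<noteq> 0" using Dv_pos[of p s] by simp
  have quot0: "\<And>a b F G::real. G \<noteq> 0 \<Longrightarrow> (a * G - F * b) / (G * G) = a / G - F * b / G\<^sup>2"
    by (simp add: field_simps power2_eq_square)
  note quot = quot0[OF nz]
  show ?thesis unfolding Ccoll_s
    apply (rule has_derivative_eq_rhs[OF has_derivative_divide'[OF dF dG nz]])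
    apply (rule ext)
    apply (simp only: cdv_def Let_def quot)
    done
qed

lemma qprime_s: "qprime A B p (s - p) w = s - pprime A B p (s - p) w"
  by (simp add: pprime_def qprime_def algebra_simps)

lemma tau_invol: "pprime A B (pprime A B p (s - p) w) (s - pprime A B p (s - p) w) w = p"
  using pprime_invol[of p "s - p"] unfolding qprime_s .

lemma tau_deriv: "((\<lambda>p. pprime A B p (s - p) w) has_derivative (\<lambda>h. h + cdv s p h *\<^sub>R w)) (at p)"
  unfolding pprime_def
  by (rule has_derivative_eq_rhs[OF has_derivative_add[OF has_derivative_ident has_derivative_scaleR[OF c_deriv has_derivative_const]]])
     simp

lemma lin_cdv: "linear (cdv s p)"
  using has_derivative_bounded_linear[OF c_deriv] bounded_linear.linear by blast

lemma cdv_w: "1 + cdv s p w = - (P (pprime A B p (s - p) w) * P (s - pprime A B p (s - p) w)) / (P p * P (s - p))"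
proof -
  have sw0: "dt p w = dt w p" "dt (s-p) w = dt w (s-p)" "dt w w = 1"
    using w_unit by (simp_all add: dotm_sym nrm2_def)
  have sw4: "dt w s = dt w p + dt w (s-p)" by (simp add: dotm_diff_right)
  note sw = sw0 sw4
  have eN: "(dt w p / P p) * dt w (s-p) - P p * 1 + (dt w (s-p) / P (s-p)) * dt w p - P (s-p) * 1
     = dt w p * dt w (s-p) / P p + dt w p * dt w (s-p) / P (s-p) - P p - P (s-p)"
    by (simp add: algebra_simps)
  have "1 + cdv s p w = - ((P p + Ccoll A B p (s-p) w * (dt w p + dt w (s-p))/(P p + P (s-p)))
        * (P (s-p) - Ccoll A B p (s-p) w * (dt w p + dt w (s-p))/(P p + P (s-p)))) / (P p * P (s-p))"
    unfolding Ccoll_alt[of A B p "s-p" w] cdv_def Let_def sw eN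
    by (rule jac_alg) (use p0_pos D_pos in auto)
  then show ?thesis
    by (simp only: p0_pprime[symmetric] p0_qprime[symmetric] qprime_s)
qed

lemma det_tau: "\<bar>det (matrix (\<lambda>h. h + cdv s p h *\<^sub>R w))\<bar>
    = P (pprime A B p (s - p) w) * P (s - pprime A B p (s - p) w) / (P p * P (s - p))"
proof -
  have a: "\<And>x. \<bar>P x\<bar> = P x" using p0_pos by (simp add: abs_of_pos)
  show ?thesis unfolding det_rank1[OF lin_cdv] cdv_w by (simp add: abs_mult a)
qed

lemma cov_s:
  fixes H :: "vec3 \<Rightarrow> vec3 \<Rightarrow> real"
  assumes Hm: "(\<lambda>(x, y). H x y) \<in> borel_measurable borel" and H0: "\<And>x y. 0 \<le> H x y"
  shows "(\<integral>\<^sup>+p. ennreal (H (pprime A B p (s - p) w) (qprime A B p (s - p) w) / (P p * P (s - p))) \<partial>lborel)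
       = (\<integral>\<^sup>+p. ennreal (H p (s - p) / (P p * P (s - p))) \<partial>lborel)"
proof -
  let ?tau = "\<lambda>p. pprime A B p (s - p) w"
  let ?f = "\<lambda>y. H y (s - y) / (P y * P (s - y))"
  note Hm' = meas_H2[OF Hm]
  have eq: "\<bar>det (matrix (\<lambda>h. h + cdv s p h *\<^sub>R w))\<bar> * ?f (?tau p)
      = H (pprime A B p (s - p) w) (qprime A B p (s - p) w) / (P p * P (s - p))" for p
    unfolding det_tau qprime_s using p0_pos[of A B "pprime A B p (s - p) w"] p0_pos[of A B "s - pprime A B p (s - p) w"]
      p0_pos[of A B p] p0_pos[of A B "s - p"] by (simp add: field_simps)
  have fm: "?f \<in> borel_measurable borel"
    by (intro borel_measurable_divide borel_measurable_times Hm' meas_p0) measurable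
  have Dm: "(\<lambda>p. \<bar>det (matrix (\<lambda>h. h + cdv s p h *\<^sub>R w))\<bar> * ?f (?tau p)) \<in> borel_measurable borel"
    unfolding eq by (intro borel_measurable_divide borel_measurable_times Hm' meas_p0 meas_pprime meas_qprime) measurable
  have "(\<integral>\<^sup>+p. ennreal (\<bar>det (matrix (\<lambda>h. h + cdv s p h *\<^sub>R w))\<bar> * ?f (?tau p)) \<partial>lborel)
      = (\<integral>\<^sup>+p. ennreal (?f p) \<partial>lborel)"
  proof (rule cov_invol_nn[OF _ tau_deriv fm _ Dm])
    show "0 \<le> ?f x" for x using H0[of x "s - x"] p0_pos[of A B x] p0_pos[of A B "s - x"] by simp
  qed (use tau_invol in auto)
  then show ?thesis unfolding eq .
qed

lemma cov_pq:
  fixes H :: "vec3 \<Rightarrow> vec3 \<Rightarrow> real"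
  assumes Hm: "(\<lambda>(x, y). H x y) \<in> borel_measurable borel" and H0: "\<And>x y. 0 \<le> H x y"
  shows "(\<integral>\<^sup>+p. (\<integral>\<^sup>+q. ennreal (H (pprime A B p q w) (qprime A B p q w) / (P p * P q)) \<partial>lborel) \<partial>lborel)
       = (\<integral>\<^sup>+p. (\<integral>\<^sup>+q. ennreal (H p q / (P p * P q)) \<partial>lborel) \<partial>lborel)"
proof -
  note Hm'[measurable] = meas_H2[OF Hm]
  have m1: "(\<lambda>(x, y). ennreal (H (pprime A B x y w) (qprime A B x y w) / (P x * P y))) \<in> borel_measurable borel"
    unfolding borel_prod[symmetric] case_prod_beta by measurable
  have m2: "(\<lambda>(x, y). ennreal (H x y / (P x * P y))) \<in> borel_measurable borel"
    unfolding borel_prod[symmetric] case_prod_beta by measurable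
  show ?thesis
    unfolding nn_shear[OF m1] nn_shear[OF m2] using cov_s[OF Hm H0] by simp
qed

end

lemma abs_LINT_le_nn:
  fixes f :: "'a \<Rightarrow> real"
  shows "ennreal \<bar>integral\<^sup>L M f\<bar> \<le> (\<integral>\<^sup>+x. ennreal \<bar>f x\<bar> \<partial>M)"
proof (cases "integrable M f")
  case True
  then show ?thesis using integral_norm_bound_ennreal[OF True] by simp
next
  case False
  then show ?thesis by (simp add: not_integrable_integral_eq)
qed

definition swt :: "real \<Rightarrow> real \<Rightarrow> real" where
  "swt th ph = indicator {0..pi} th * indicator {0..2*pi} ph * sin th"

lemma swt_nonneg: "0 \<le> swt th ph"
  by (auto simp: swt_def indicator_def intro!: sin_ge_zero)

lemma swt_le: "swt th ph \<le> indicator {0..pi} th * indicator {0..2*pi} ph"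
  by (auto simp: swt_def indicator_def)

lemma meas_swt[measurable]:
  assumes [measurable]: "f \<in> borel_measurable M" "g \<in> borel_measurable M"
  shows "(\<lambda>x. swt (f x) (g x)) \<in> borel_measurable M"
  unfolding swt_def by measurable

lemma sphere_int_eq:
  "sphere_int A B g = (LINT th|lborel. LINT ph|lborel. swt th ph * g (sph A B th ph))"
  unfolding sphere_int_def set_lebesgue_integral_def swt_def by (simp add: mult.assoc)

lemma sphere_int_abs_le:
  "ennreal \<bar>sphere_int A B g\<bar> \<le> (\<integral>\<^sup>+th. \<integral>\<^sup>+ph. ennreal (swt th ph * \<bar>g (sph A B th ph)\<bar>) \<partial>lborel \<partial>lborel)"
proof -
  have "ennreal \<bar>sphere_int A B g\<bar> \<le> (\<integral>\<^sup>+th. ennreal \<bar>LINT ph|lborel. swt th ph * g (sph A B th ph)\<bar> \<partial>lborel)"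
    unfolding sphere_int_eq by (rule abs_LINT_le_nn)
  also have "\<dots> \<le> (\<integral>\<^sup>+th. \<integral>\<^sup>+ph. ennreal \<bar>swt th ph * g (sph A B th ph)\<bar> \<partial>lborel \<partial>lborel)"
    by (intro nn_integral_mono abs_LINT_le_nn)
  also have "\<dots> = (\<integral>\<^sup>+th. \<integral>\<^sup>+ph. ennreal (swt th ph * \<bar>g (sph A B th ph)\<bar>) \<partial>lborel \<partial>lborel)"
    by (simp add: abs_mult swt_nonneg)
  finally show ?thesis .
qed

lemma swt_total: "(\<integral>\<^sup>+th. \<integral>\<^sup>+ph. ennreal (swt th ph) \<partial>lborel \<partial>lborel) \<le> ennreal (2 * pi\<^sup>2)"
proof -
  have "(\<integral>\<^sup>+th. \<integral>\<^sup>+ph. ennreal (swt th ph) \<partial>lborel \<partial>lborel)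
      \<le> (\<integral>\<^sup>+th. \<integral>\<^sup>+ph. indicator {0..pi} th * indicator {0..2*pi} ph \<partial>lborel \<partial>lborel)"
    by (intro nn_integral_mono) (use swt_le in \<open>auto simp: ennreal_indicator[symmetric] ennreal_mult'[symmetric]\<close>)
  also have "\<dots> = (\<integral>\<^sup>+th. indicator {0..pi} th * (\<integral>\<^sup>+ph. indicator {0..2*pi} ph \<partial>lborel) \<partial>lborel)"
    by (simp add: nn_integral_cmult)
  also have "\<dots> = (\<integral>\<^sup>+th. indicator {0..pi} th * ennreal (2*pi) \<partial>lborel)"
    by simp
  also have "\<dots> = ennreal (2*pi) * ennreal pi"
    by (simp add: nn_integral_multc mult.commute)
  also have "\<dots> = ennreal (2 * pi\<^sup>2)"
    by (simp add: ennreal_mult'[symmetric] power2_eq_square mult.assoc)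
  finally show ?thesis .
qed

lemma meas_X4:
  fixes X :: "vec3 \<Rightarrow> vec3 \<Rightarrow> real \<Rightarrow> real \<Rightarrow> 'b::topological_space"
  assumes Xm: "(\<lambda>(p, q, th, ph). X p q th ph) \<in> borel_measurable borel"
    and [measurable]: "f1 \<in> borel_measurable M" "f2 \<in> borel_measurable M" "f3 \<in> borel_measurable M" "f4 \<in> borel_measurable M"
  shows "(\<lambda>x. X (f1 x) (f2 x) (f3 x) (f4 x)) \<in> borel_measurable M"
proof -
  have "(\<lambda>x. (\<lambda>(p, q, th, ph). X p q th ph) (f1 x, f2 x, f3 x, f4 x)) \<in> borel_measurable M"
    by (rule measurable_compose[OF _ Xm]) (unfold borel_prod[symmetric], measurable)
  then show ?thesis by simp
qed

lemma swap4:
  fixes X :: "vec3 \<Rightarrow> vec3 \<Rightarrow> real \<Rightarrow> real \<Rightarrow> ennreal"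
  assumes Xm: "(\<lambda>(p, q, th, ph). X p q th ph) \<in> borel_measurable borel"
  shows "(\<integral>\<^sup>+p. \<integral>\<^sup>+q. \<integral>\<^sup>+th. \<integral>\<^sup>+ph. X p q th ph \<partial>lborel \<partial>lborel \<partial>lborel \<partial>lborel)
       = (\<integral>\<^sup>+th. \<integral>\<^sup>+ph. \<integral>\<^sup>+p. \<integral>\<^sup>+q. X p q th ph \<partial>lborel \<partial>lborel \<partial>lborel \<partial>lborel)"
proof -
  note [measurable (raw)] = meas_X4[OF Xm]
  have 1: "(\<integral>\<^sup>+q. \<integral>\<^sup>+th. \<integral>\<^sup>+ph. X p q th ph \<partial>lborel \<partial>lborel \<partial>lborel)
      = (\<integral>\<^sup>+th. \<integral>\<^sup>+q. \<integral>\<^sup>+ph. X p q th ph \<partial>lborel \<partial>lborel \<partial>lborel)" for p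
    by (rule lborel_pair.Fubini'[symmetric]) measurable
  have 2: "(\<integral>\<^sup>+q. \<integral>\<^sup>+ph. X p q th ph \<partial>lborel \<partial>lborel)
      = (\<integral>\<^sup>+ph. \<integral>\<^sup>+q. X p q th ph \<partial>lborel \<partial>lborel)" for p th
    by (rule lborel_pair.Fubini'[symmetric]) measurable
  have 3: "(\<integral>\<^sup>+p. \<integral>\<^sup>+th. \<integral>\<^sup>+ph. \<integral>\<^sup>+q. X p q th ph \<partial>lborel \<partial>lborel \<partial>lborel \<partial>lborel)
      = (\<integral>\<^sup>+th. \<integral>\<^sup>+p. \<integral>\<^sup>+ph. \<integral>\<^sup>+q. X p q th ph \<partial>lborel \<partial>lborel \<partial>lborel \<partial>lborel)"
    by (rule lborel_pair.Fubini'[symmetric]) measurable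
  have 4: "(\<integral>\<^sup>+p. \<integral>\<^sup>+ph. \<integral>\<^sup>+q. X p q th ph \<partial>lborel \<partial>lborel \<partial>lborel)
      = (\<integral>\<^sup>+ph. \<integral>\<^sup>+p. \<integral>\<^sup>+q. X p q th ph \<partial>lborel \<partial>lborel \<partial>lborel)" for th
    by (rule lborel_pair.Fubini'[symmetric]) measurable
  show ?thesis by (simp add: 1 2 3 4)
qed

lemma meas_V4:
  fixes X :: "vec3 \<Rightarrow> vec3 \<Rightarrow> vec3 \<Rightarrow> vec3 \<Rightarrow> 'b::topological_space"
  assumes Xm: "(\<lambda>(p, q, th, ph). X p q th ph) \<in> borel_measurable borel"
    and [measurable]: "f1 \<in> borel_measurable M" "f2 \<in> borel_measurable M" "f3 \<in> borel_measurable M" "f4 \<in> borel_measurable M"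
  shows "(\<lambda>x. X (f1 x) (f2 x) (f3 x) (f4 x)) \<in> borel_measurable M"
proof -
  have "(\<lambda>x. (\<lambda>(p, q, th, ph). X p q th ph) (f1 x, f2 x, f3 x, f4 x)) \<in> borel_measurable M"
    by (rule measurable_compose[OF _ Xm]) (unfold borel_prod[symmetric], measurable)
  then show ?thesis by simp
qed

lemma meas_F1:
  fixes f :: "vec3 \<Rightarrow> real"
  assumes "f \<in> borel_measurable borel" "g \<in> borel_measurable M"
  shows "(\<lambda>x. f (g x)) \<in> borel_measurable M"
  using measurable_compose[OF assms(2,1)] by simp

locale qs =
  fixes A B C1 :: real and S :: kernel
  assumes A_pos: "A > 0" and B_pos: "B > 0"
    and S_meas: "(\<lambda>(p, q, p', q'). S A B p q p' q') \<in> borel_measurable borel"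
    and S_nonneg: "\<And>p q p' q'. 0 \<le> S A B p q p' q'"
    and S_bound: "\<And>p q p' q'. S A B p q p' q' \<le> C1"
    and S_sym: "\<And>p q p' q'. S A B p q p' q' = S A B p' q' p q"
begin

abbreviation "P \<equiv> p0 A B"

definition Kc :: "vec3 \<Rightarrow> vec3 \<Rightarrow> vec3 \<Rightarrow> real" where
  "Kc p q w = S A B p q (pprime A B p q w) (qprime A B p q w)"

lemma C1_nonneg: "0 \<le> C1" using S_nonneg S_bound order_trans by blast

lemma Kc_nonneg: "0 \<le> Kc p q w" by (simp add: Kc_def S_nonneg)
lemma Kc_le: "Kc p q w \<le> C1" by (simp add: Kc_def S_bound)

lemmas meas_S4[measurable (raw)] = meas_V4[OF S_meas]

lemma meas_Kc[measurable (raw)]: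
  assumes [measurable]: "f \<in> borel_measurable M" "g \<in> borel_measurable M" "h \<in> borel_measurable M"
  shows "(\<lambda>x. Kc (f x) (g x) (h x)) \<in> borel_measurable M"
  unfolding Kc_def by measurable

lemma collw_sph: "collw A B (sph A B th ph)"
  by unfold_locales (use A_pos B_pos sph_unit in auto)

lemma key_nn:
  fixes f g :: "vec3 \<Rightarrow> real"
  assumes fm: "f \<in> borel_measurable borel" and gm: "g \<in> borel_measurable borel"
  shows "(\<integral>\<^sup>+p. \<integral>\<^sup>+q. \<integral>\<^sup>+th. \<integral>\<^sup>+ph. ennreal (swt th ph * (\<bar>f (pprime A B p q (sph A B th ph))\<bar> * \<bar>g (qprime A B p q (sph A B th ph))\<bar>
         * Kc p q (sph A B th ph)) / (P p * P q)) \<partial>lborel \<partial>lborel \<partial>lborel \<partial>lborel)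
     \<le> ennreal (2 * pi\<^sup>2 * C1) * (\<integral>\<^sup>+p. ennreal \<bar>f p\<bar> \<partial>lborel) * (\<integral>\<^sup>+q. ennreal \<bar>g q\<bar> \<partial>lborel)"
proof -
  note [measurable (raw)] = meas_F1[OF fm] meas_F1[OF gm]
  define M where "M = ennreal C1 * (\<integral>\<^sup>+p. ennreal \<bar>f p\<bar> \<partial>lborel) * (\<integral>\<^sup>+q. ennreal \<bar>g q\<bar> \<partial>lborel)"
  let ?Y = "\<lambda>w p q. \<bar>f (pprime A B p q w)\<bar> * \<bar>g (qprime A B p q w)\<bar> * Kc p q w / (P p * P q)"
  have inner: "(\<integral>\<^sup>+p. \<integral>\<^sup>+q. ennreal (?Y (sph A B th ph) p q) \<partial>lborel \<partial>lborel) \<le> M" for th ph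
  proof -
    interpret cw: collw A B "sph A B th ph" by (rule collw_sph)
    let ?H = "\<lambda>x y. \<bar>f x\<bar> * \<bar>g y\<bar> * Kc x y (sph A B th ph)"
    have Hm: "(\<lambda>(x, y). ?H x y) \<in> borel_measurable borel"
      unfolding borel_prod[symmetric] case_prod_beta by measurable
    have H0: "\<And>x y. 0 \<le> ?H x y" by (simp add: Kc_nonneg)
    have HY: "?H (pprime A B p q (sph A B th ph)) (qprime A B p q (sph A B th ph)) / (P p * P q) = ?Y (sph A B th ph) p q" for p q
      unfolding Kc_def cw.pprime_invol cw.qprime_invol using S_sym by simp
    have "(\<integral>\<^sup>+p. \<integral>\<^sup>+q. ennreal (?Y (sph A B th ph) p q) \<partial>lborel \<partial>lborel)
        = (\<integral>\<^sup>+p. \<integral>\<^sup>+q. ennreal (?H p q / (P p * P q)) \<partial>lborel \<partial>lborel)"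
      using cw.cov_pq[OF Hm H0] unfolding HY .
    also have "\<dots> \<le> (\<integral>\<^sup>+p. \<integral>\<^sup>+q. ennreal \<bar>f p\<bar> * (ennreal C1 * ennreal \<bar>g q\<bar>) \<partial>lborel \<partial>lborel)"
    proof (intro nn_integral_mono)
      fix p q
      have y1: "1 \<le> P p * P q" using mult_mono[OF p0_ge1[of A B p] p0_ge1[of A B q]] p0_pos[of A B p] by simp
      have "?H p q / (P p * P q) \<le> ?H p q"
        using y1 H0[of p q]
        by (simp add: divide_le_eq mult_le_cancel_left1 one_le_mult_iff)
      also have "\<dots> \<le> \<bar>f p\<bar> * (C1 * \<bar>g q\<bar>)"
      proof -
        have "\<bar>f p\<bar> * \<bar>g q\<bar> * Kc p q (sph A B th ph) \<le> \<bar>f p\<bar> * \<bar>g q\<bar> * C1"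
          using Kc_le[of p q "sph A B th ph"] by (intro mult_left_mono) auto
        then show ?thesis by (simp add: algebra_simps)
      qed
      finally show "ennreal (?H p q / (P p * P q)) \<le> ennreal \<bar>f p\<bar> * (ennreal C1 * ennreal \<bar>g q\<bar>)"
        using C1_nonneg by (simp add: ennreal_mult[symmetric] ennreal_leI)
    qed
    also have "\<dots> = M"
      unfolding M_def by (simp add: nn_integral_cmult nn_integral_multc mult.assoc mult.left_commute)
    finally show ?thesis .
  qed
  have Xm: "(\<lambda>(p, q, th, ph). ennreal (swt th ph * (\<bar>f (pprime A B p q (sph A B th ph))\<bar> * \<bar>g (qprime A B p q (sph A B th ph))\<bar>
         * Kc p q (sph A B th ph)) / (P p * P q))) \<in> borel_measurable borel"
    unfolding borel_prod[symmetric] case_prod_beta by measurable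
  have "(\<integral>\<^sup>+p. \<integral>\<^sup>+q. \<integral>\<^sup>+th. \<integral>\<^sup>+ph. ennreal (swt th ph * (\<bar>f (pprime A B p q (sph A B th ph))\<bar> * \<bar>g (qprime A B p q (sph A B th ph))\<bar>
         * Kc p q (sph A B th ph)) / (P p * P q)) \<partial>lborel \<partial>lborel \<partial>lborel \<partial>lborel)
      = (\<integral>\<^sup>+th. \<integral>\<^sup>+ph. \<integral>\<^sup>+p. \<integral>\<^sup>+q. ennreal (swt th ph) * ennreal (?Y (sph A B th ph) p q) \<partial>lborel \<partial>lborel \<partial>lborel \<partial>lborel)"
    unfolding swap4[OF Xm] by (intro nn_integral_cong, subst ennreal_mult'[symmetric], rule swt_nonneg, simp add: mult.assoc)
  also have "\<dots> = (\<integral>\<^sup>+th. \<integral>\<^sup>+ph. ennreal (swt th ph) * (\<integral>\<^sup>+p. \<integral>\<^sup>+q. ennreal (?Y (sph A B th ph) p q) \<partial>lborel \<partial>lborel) \<partial>lborel \<partial>lborel)"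
    by (simp add: nn_integral_cmult)
  also have "\<dots> \<le> (\<integral>\<^sup>+th. \<integral>\<^sup>+ph. ennreal (swt th ph) * M \<partial>lborel \<partial>lborel)"
    by (intro nn_integral_mono mult_left_mono inner) simp
  also have "\<dots> = (\<integral>\<^sup>+th. \<integral>\<^sup>+ph. ennreal (swt th ph) \<partial>lborel \<partial>lborel) * M"
    by (simp add: nn_integral_multc)
  also have "\<dots> \<le> ennreal (2 * pi\<^sup>2) * M"
    by (intro mult_right_mono swt_total) simp
  also have "\<dots> = ennreal (2 * pi\<^sup>2 * C1) * (\<integral>\<^sup>+p. ennreal \<bar>f p\<bar> \<partial>lborel) * (\<integral>\<^sup>+q. ennreal \<bar>g q\<bar> \<partial>lborel)"
    unfolding M_def using C1_nonneg by (simp add: ennreal_mult mult.assoc)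
  finally show ?thesis .
qed

end

lemma sf_lborel2: "sigma_finite_measure (lborel \<Otimes>\<^sub>M lborel :: (real \<times> real) measure)"
  by (intro sigma_finite_pair_measure lborel.sigma_finite_measure_axioms)

lemma psf3: "pair_sigma_finite (lborel :: vec3 measure) (lborel \<Otimes>\<^sub>M lborel :: (real \<times> real) measure)"
  unfolding pair_sigma_finite_def using sf_lborel2 lborel.sigma_finite_measure_axioms by auto

lemma meas_Z3:
  fixes Z :: "vec3 \<Rightarrow> real \<Rightarrow> real \<Rightarrow> 'b::topological_space"
  assumes Zm: "(\<lambda>(q, th, ph). Z q th ph) \<in> borel_measurable borel"
    and [measurable]: "f1 \<in> borel_measurable M" "f2 \<in> borel_measurable M" "f3 \<in> borel_measurable M"
  shows "(\<lambda>x. Z (f1 x) (f2 x) (f3 x)) \<in> borel_measurable M"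
proof -
  have "(\<lambda>x. (\<lambda>(q, th, ph). Z q th ph) (f1 x, f2 x, f3 x)) \<in> borel_measurable M"
    by (rule measurable_compose[OF _ Zm]) (unfold borel_prod[symmetric], measurable)
  then show ?thesis by simp
qed

lemma nest3:
  fixes Z :: "vec3 \<Rightarrow> real \<Rightarrow> real \<Rightarrow> real"
  assumes Zm: "(\<lambda>(q, th, ph). Z q th ph) \<in> borel_measurable borel"
    and int: "integrable (lborel \<Otimes>\<^sub>M (lborel \<Otimes>\<^sub>M lborel)) (\<lambda>(q, th, ph). Z q th ph)"
  shows "(LINT q|lborel. LINT th|lborel. LINT ph|lborel. Z q th ph)
       = integral\<^sup>L (lborel \<Otimes>\<^sub>M (lborel \<Otimes>\<^sub>M lborel)) (\<lambda>(q, th, ph). Z q th ph)"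
proof -
  interpret p3: pair_sigma_finite "lborel :: vec3 measure" "lborel \<Otimes>\<^sub>M lborel :: (real \<times> real) measure"
    by (rule psf3)
  note [measurable (raw)] = meas_Z3[OF Zm]
  have ae: "AE q in lborel. integrable (lborel \<Otimes>\<^sub>M lborel) (\<lambda>(th, ph). Z q th ph)"
    using p3.AE_integrable_fst'[OF int] by (simp add: case_prod_beta')
  have ae2: "AE q in lborel. (LINT th|lborel. LINT ph|lborel. Z q th ph)
      = integral\<^sup>L (lborel \<Otimes>\<^sub>M lborel) (\<lambda>(th, ph). Z q th ph)"
    using ae
  proof eventually_elim
    case (elim q)
    show ?case using lborel_pair.integral_fst'[OF elim] by (simp add: case_prod_beta')
  qed
  have "(LINT q|lborel. LINT th|lborel. LINT ph|lborel. Z q th ph)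
      = (LINT q|lborel. integral\<^sup>L (lborel \<Otimes>\<^sub>M lborel) (\<lambda>(th, ph). Z q th ph))"
    by (rule integral_cong_AE) (measurable, use ae2 in auto)
  also have "\<dots> = integral\<^sup>L (lborel \<Otimes>\<^sub>M (lborel \<Otimes>\<^sub>M lborel)) (\<lambda>(q, th, ph). Z q th ph)"
    using p3.integral_fst'[OF int] by (simp add: case_prod_beta')
  finally show ?thesis .
qed

lemma cmult3:
  fixes Y :: "vec3 \<Rightarrow> real \<Rightarrow> real \<Rightarrow> ennreal"
  assumes Ym: "(\<lambda>(q, th, ph). Y q th ph) \<in> borel_measurable borel"
  shows "c * (\<integral>\<^sup>+q. \<integral>\<^sup>+th. \<integral>\<^sup>+ph. Y q th ph \<partial>lborel \<partial>lborel \<partial>lborel)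
       = (\<integral>\<^sup>+q. \<integral>\<^sup>+th. \<integral>\<^sup>+ph. c * Y q th ph \<partial>lborel \<partial>lborel \<partial>lborel)"
proof -
  note [measurable (raw)] = meas_Z3[OF Ym]
  show ?thesis by (simp add: nn_integral_cmult[symmetric])
qed

lemma cmult4:
  fixes X :: "vec3 \<Rightarrow> vec3 \<Rightarrow> real \<Rightarrow> real \<Rightarrow> ennreal"
  assumes Xm: "(\<lambda>(p, q, th, ph). X p q th ph) \<in> borel_measurable borel"
  shows "c * (\<integral>\<^sup>+p. \<integral>\<^sup>+q. \<integral>\<^sup>+th. \<integral>\<^sup>+ph. X p q th ph \<partial>lborel \<partial>lborel \<partial>lborel \<partial>lborel)
       = (\<integral>\<^sup>+p. \<integral>\<^sup>+q. \<integral>\<^sup>+th. \<integral>\<^sup>+ph. c * X p q th ph \<partial>lborel \<partial>lborel \<partial>lborel \<partial>lborel)"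
proof -
  note [measurable (raw)] = meas_X4[OF Xm]
  show ?thesis by (simp add: nn_integral_cmult[symmetric])
qed

lemma int_borel: "integrable lborel (f :: vec3 \<Rightarrow> real) \<Longrightarrow> f \<in> borel_measurable borel"
  using borel_measurable_integrable[of lborel f] by simp

lemma nn_L1_fin: "integrable lborel (f :: vec3 \<Rightarrow> real) \<Longrightarrow> (\<integral>\<^sup>+p. ennreal \<bar>f p\<bar> \<partial>lborel) < \<infinity>"
  using integrable_iff_bounded[of lborel f] by simp

lemma sphere_int_cmult: "sphere_int A B (\<lambda>w. c * h w) = c * sphere_int A B h"
proof -
  have e: "\<And>th ph. swt th ph * (c * h (sph A B th ph)) = c * (swt th ph * h (sph A B th ph))" by simp
  show ?thesis unfolding sphere_int_eq e by simp
qed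

lemma sphere_int_cmult_assoc: "sphere_int A B (\<lambda>w. c * d * h w) = c * sphere_int A B (\<lambda>w. d * h w)"
  using sphere_int_cmult[of A B c "\<lambda>w. d * h w"] by (simp add: mult.assoc)

context qs begin

definition Zp :: "(vec3 \<Rightarrow> real) \<Rightarrow> (vec3 \<Rightarrow> real) \<Rightarrow> vec3 \<Rightarrow> vec3 \<Rightarrow> real \<Rightarrow> real \<Rightarrow> real" where
  "Zp f g p q th ph = A * B\<^sup>2 / P q * (swt th ph * (f (pprime A B p q (sph A B th ph)) * g (qprime A B p q (sph A B th ph))
      * Kc p q (sph A B th ph)))"

lemma Qplus_eq: "Qplus S A B f g p = (LINT q|lborel. LINT th|lborel. LINT ph|lborel. Zp f g p q th ph)"
  unfolding Qplus_def sphere_int_eq Zp_def Kc_def by (simp add: mult.assoc)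

lemma meas_Zp[measurable (raw)]:
  assumes fm: "f \<in> borel_measurable borel" and gm: "g \<in> borel_measurable borel"
    and [measurable]: "f1 \<in> borel_measurable M" "f2 \<in> borel_measurable M" "f3 \<in> borel_measurable M" "f4 \<in> borel_measurable M"
  shows "(\<lambda>x. Zp f g (f1 x) (f2 x) (f3 x) (f4 x)) \<in> borel_measurable M"
proof -
  note [measurable (raw)] = meas_F1[OF fm] meas_F1[OF gm]
  show ?thesis unfolding Zp_def by measurable
qed

lemma Qplus_meas:
  assumes fm: "f \<in> borel_measurable borel" and gm: "g \<in> borel_measurable borel"
  shows "(\<lambda>p. Qplus S A B f g p) \<in> borel_measurable borel"
proof -
  note [measurable (raw)] = meas_Zp[OF fm gm]
  show ?thesis unfolding Qplus_eq by measurable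
qed

lemma abs_Qplus_nn: "ennreal \<bar>Qplus S A B f g p\<bar> \<le> (\<integral>\<^sup>+q. \<integral>\<^sup>+th. \<integral>\<^sup>+ph. ennreal \<bar>Zp f g p q th ph\<bar> \<partial>lborel \<partial>lborel \<partial>lborel)"
proof -
  have "ennreal \<bar>Qplus S A B f g p\<bar> \<le> (\<integral>\<^sup>+q. ennreal \<bar>LINT th|lborel. LINT ph|lborel. Zp f g p q th ph\<bar> \<partial>lborel)"
    unfolding Qplus_eq by (rule abs_LINT_le_nn)
  also have "\<dots> \<le> (\<integral>\<^sup>+q. \<integral>\<^sup>+th. ennreal \<bar>LINT ph|lborel. Zp f g p q th ph\<bar> \<partial>lborel \<partial>lborel)"
    by (intro nn_integral_mono abs_LINT_le_nn)
  also have "\<dots> \<le> (\<integral>\<^sup>+q. \<integral>\<^sup>+th. \<integral>\<^sup>+ph. ennreal \<bar>Zp f g p q th ph\<bar> \<partial>lborel \<partial>lborel \<partial>lborel)"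
    by (intro nn_integral_mono abs_LINT_le_nn)
  finally show ?thesis .
qed

lemma Zp_abs: "\<bar>Zp f g p q th ph\<bar> / P p = A * B\<^sup>2 * (swt th ph * (\<bar>f (pprime A B p q (sph A B th ph))\<bar> * \<bar>g (qprime A B p q (sph A B th ph))\<bar>
         * Kc p q (sph A B th ph)) / (P p * P q))"
proof -
  have "\<bar>Zp f g p q th ph\<bar> = A * B\<^sup>2 / P q * (swt th ph * (\<bar>f (pprime A B p q (sph A B th ph))\<bar> * \<bar>g (qprime A B p q (sph A B th ph))\<bar>
         * Kc p q (sph A B th ph)))"
    unfolding Zp_def using A_pos B_pos p0_pos[of A B q] swt_nonneg[of th ph] Kc_nonneg[of p q "sph A B th ph"]
    by (simp add: abs_mult)
  then show ?thesis using p0_pos[of A B p] p0_pos[of A B q] by (simp add: field_simps)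
qed

definition "kap = A * B\<^sup>2 * (2 * pi\<^sup>2 * C1)"

lemma kap_nonneg: "0 \<le> kap" unfolding kap_def using A_pos B_pos C1_nonneg by simp

lemma Qplus_L1':
  assumes fm: "f \<in> borel_measurable borel" and gm: "g \<in> borel_measurable borel"
  shows "(\<integral>\<^sup>+p. ennreal (1 / P p) * (\<integral>\<^sup>+q. \<integral>\<^sup>+th. \<integral>\<^sup>+ph. ennreal \<bar>Zp f g p q th ph\<bar> \<partial>lborel \<partial>lborel \<partial>lborel) \<partial>lborel)
     \<le> ennreal kap * (\<integral>\<^sup>+p. ennreal \<bar>f p\<bar> \<partial>lborel) * (\<integral>\<^sup>+q. ennreal \<bar>g q\<bar> \<partial>lborel)"
proof -
  note [measurable (raw)] = meas_Zp[OF fm gm] meas_F1[OF fm] meas_F1[OF gm]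
  have m3: "(\<lambda>(q, th, ph). ennreal \<bar>Zp f g p q th ph\<bar>) \<in> borel_measurable borel" for p
    unfolding borel_prod[symmetric] case_prod_beta by measurable
  have m4: "(\<lambda>(p, q, th, ph). ennreal (swt th ph * (\<bar>f (pprime A B p q (sph A B th ph))\<bar> * \<bar>g (qprime A B p q (sph A B th ph))\<bar>
         * Kc p q (sph A B th ph)) / (P p * P q))) \<in> borel_measurable borel"
    unfolding borel_prod[symmetric] case_prod_beta by measurable
  have "(\<integral>\<^sup>+p. ennreal (1 / P p) * (\<integral>\<^sup>+q. \<integral>\<^sup>+th. \<integral>\<^sup>+ph. ennreal \<bar>Zp f g p q th ph\<bar> \<partial>lborel \<partial>lborel \<partial>lborel) \<partial>lborel)
    = (\<integral>\<^sup>+p. \<integral>\<^sup>+q. \<integral>\<^sup>+th. \<integral>\<^sup>+ph. ennreal (1 / P p) * ennreal \<bar>Zp f g p q th ph\<bar> \<partial>lborel \<partial>lborel \<partial>lborel \<partial>lborel)"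
    by (simp only: cmult3[OF m3])
  also have "\<dots> = (\<integral>\<^sup>+p. \<integral>\<^sup>+q. \<integral>\<^sup>+th. \<integral>\<^sup>+ph. ennreal (A * B\<^sup>2) * ennreal (swt th ph * (\<bar>f (pprime A B p q (sph A B th ph))\<bar> * \<bar>g (qprime A B p q (sph A B th ph))\<bar>
         * Kc p q (sph A B th ph)) / (P p * P q)) \<partial>lborel \<partial>lborel \<partial>lborel \<partial>lborel)"
  proof (intro nn_integral_cong)
    fix p q th ph
    have "ennreal (1 / P p) * ennreal \<bar>Zp f g p q th ph\<bar> = ennreal (\<bar>Zp f g p q th ph\<bar> / P p)"
      using p0_pos[of A B p] by (simp add: ennreal_mult'[symmetric])
    also have "\<dots> = ennreal (A * B\<^sup>2) * ennreal (swt th ph * (\<bar>f (pprime A B p q (sph A B th ph))\<bar> * \<bar>g (qprime A B p q (sph A B th ph))\<bar>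
         * Kc p q (sph A B th ph)) / (P p * P q))"
      unfolding Zp_abs using A_pos B_pos by (simp add: ennreal_mult'[symmetric])
    finally show "ennreal (1 / P p) * ennreal \<bar>Zp f g p q th ph\<bar> = \<dots>" .
  qed
  also have "\<dots> = ennreal (A * B\<^sup>2) * (\<integral>\<^sup>+p. \<integral>\<^sup>+q. \<integral>\<^sup>+th. \<integral>\<^sup>+ph. ennreal (swt th ph * (\<bar>f (pprime A B p q (sph A B th ph))\<bar> * \<bar>g (qprime A B p q (sph A B th ph))\<bar>
         * Kc p q (sph A B th ph)) / (P p * P q)) \<partial>lborel \<partial>lborel \<partial>lborel \<partial>lborel)"
    by (simp only: cmult4[OF m4])
  also have "\<dots> \<le> ennreal (A * B\<^sup>2) * (ennreal (2 * pi\<^sup>2 * C1) * (\<integral>\<^sup>+p. ennreal \<bar>f p\<bar> \<partial>lborel) * (\<integral>\<^sup>+q. ennreal \<bar>g q\<bar> \<partial>lborel))"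
    by (intro mult_left_mono key_nn fm gm) simp
  also have "\<dots> = ennreal kap * (\<integral>\<^sup>+p. ennreal \<bar>f p\<bar> \<partial>lborel) * (\<integral>\<^sup>+q. ennreal \<bar>g q\<bar> \<partial>lborel)"
    unfolding kap_def using A_pos B_pos C1_nonneg by (simp add: ennreal_mult mult.assoc)
  finally show ?thesis .
qed

lemma Qplus_L1:
  assumes fm: "f \<in> borel_measurable borel" and gm: "g \<in> borel_measurable borel"
  shows "(\<integral>\<^sup>+p. ennreal (\<bar>Qplus S A B f g p\<bar> / P p) \<partial>lborel)
     \<le> ennreal kap * (\<integral>\<^sup>+p. ennreal \<bar>f p\<bar> \<partial>lborel) * (\<integral>\<^sup>+q. ennreal \<bar>g q\<bar> \<partial>lborel)"
proof -
  have "(\<integral>\<^sup>+p. ennreal (\<bar>Qplus S A B f g p\<bar> / P p) \<partial>lborel)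
     \<le> (\<integral>\<^sup>+p. ennreal (1 / P p) * (\<integral>\<^sup>+q. \<integral>\<^sup>+th. \<integral>\<^sup>+ph. ennreal \<bar>Zp f g p q th ph\<bar> \<partial>lborel \<partial>lborel \<partial>lborel) \<partial>lborel)"
  proof (intro nn_integral_mono)
    fix p
    have "ennreal (\<bar>Qplus S A B f g p\<bar> / P p) = ennreal (1 / P p) * ennreal \<bar>Qplus S A B f g p\<bar>"
      using p0_pos[of A B p] by (simp add: ennreal_mult'[symmetric])
    also have "\<dots> \<le> ennreal (1 / P p) * (\<integral>\<^sup>+q. \<integral>\<^sup>+th. \<integral>\<^sup>+ph. ennreal \<bar>Zp f g p q th ph\<bar> \<partial>lborel \<partial>lborel \<partial>lborel)"
      by (intro mult_left_mono abs_Qplus_nn) simp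
    finally show "ennreal (\<bar>Qplus S A B f g p\<bar> / P p) \<le> \<dots>" .
  qed
  also have "\<dots> \<le> ennreal kap * (\<integral>\<^sup>+p. ennreal \<bar>f p\<bar> \<partial>lborel) * (\<integral>\<^sup>+q. ennreal \<bar>g q\<bar> \<partial>lborel)"
    by (rule Qplus_L1'[OF fm gm])
  finally show ?thesis .
qed

lemma Qplus_ae_int:
  assumes fi: "integrable lborel f" and gi: "integrable lborel g"
  shows "AE p in lborel. integrable (lborel \<Otimes>\<^sub>M (lborel \<Otimes>\<^sub>M lborel)) (\<lambda>(q, th, ph). Zp f g p q th ph)"
proof -
  have fm: "f \<in> borel_measurable borel" using int_borel[OF fi] .
  have gm: "g \<in> borel_measurable borel" using int_borel[OF gi] .
  note [measurable (raw)] = meas_Zp[OF fm gm] meas_F1[OF fm] meas_F1[OF gm]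
  define F where "F p = (\<integral>\<^sup>+q. \<integral>\<^sup>+th. \<integral>\<^sup>+ph. ennreal \<bar>Zp f g p q th ph\<bar> \<partial>lborel \<partial>lborel \<partial>lborel)" for p
  have Fm: "(\<lambda>p. ennreal (1 / P p) * F p) \<in> borel_measurable lborel"
    unfolding F_def by measurable
  have "(\<integral>\<^sup>+p. ennreal (1 / P p) * F p \<partial>lborel) \<le> ennreal kap * (\<integral>\<^sup>+p. ennreal \<bar>f p\<bar> \<partial>lborel) * (\<integral>\<^sup>+q. ennreal \<bar>g q\<bar> \<partial>lborel)"
    unfolding F_def by (rule Qplus_L1'[OF fm gm])
  also have "\<dots> < \<infinity>" using nn_L1_fin[OF fi] nn_L1_fin[OF gi] by (simp add: ennreal_mult_less_top)
  finally have "(\<integral>\<^sup>+p. ennreal (1 / P p) * F p \<partial>lborel) \<noteq> \<infinity>" by simp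
  then have ae: "AE p in lborel. ennreal (1 / P p) * F p \<noteq> \<infinity>" by (rule nn_integral_PInf_AE[OF Fm])
  show ?thesis using ae
  proof eventually_elim
    case (elim p)
    have pos: "0 < 1 / P p" using p0_pos[of A B p] by simp
    then have Ffin: "F p < \<infinity>" using elim by (auto simp: ennreal_mult_eq_top_iff top.not_eq_extremum)
    have Zm3: "(\<lambda>x. ennreal \<bar>Zp f g p (fst x) (fst (snd x)) (snd (snd x))\<bar>) \<in> borel_measurable (lborel \<Otimes>\<^sub>M (lborel \<Otimes>\<^sub>M lborel))"
      by measurable
    have Zm2: "(\<lambda>y. ennreal \<bar>Zp f g p q (fst y) (snd y)\<bar>) \<in> borel_measurable (lborel \<Otimes>\<^sub>M lborel)" for q
      by measurable
    have "(\<integral>\<^sup>+x. ennreal (norm ((\<lambda>(q, th, ph). Zp f g p q th ph) x)) \<partial>(lborel \<Otimes>\<^sub>M (lborel \<Otimes>\<^sub>M lborel)))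
        = (\<integral>\<^sup>+x. ennreal \<bar>Zp f g p (fst x) (fst (snd x)) (snd (snd x))\<bar> \<partial>(lborel \<Otimes>\<^sub>M (lborel \<Otimes>\<^sub>M lborel)))"
      by (simp add: case_prod_beta)
    also have "\<dots> = (\<integral>\<^sup>+q. \<integral>\<^sup>+y. ennreal \<bar>Zp f g p q (fst y) (snd y)\<bar> \<partial>(lborel \<Otimes>\<^sub>M lborel) \<partial>lborel)"
      using sigma_finite_measure.nn_integral_fst[OF sf_lborel2 Zm3] by simp
    also have "\<dots> = F p"
      unfolding F_def using lborel.nn_integral_fst[OF Zm2] by simp
    finally show ?case using Ffin by (subst integrable_iff_bounded) (auto, measurable)
  qed
qed

lemma Qplus_rep:
  assumes fi: "integrable lborel f" and gi: "integrable lborel g"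
  shows "AE p in lborel. Qplus S A B f g p = integral\<^sup>L (lborel \<Otimes>\<^sub>M (lborel \<Otimes>\<^sub>M lborel)) (\<lambda>(q, th, ph). Zp f g p q th ph)"
  using Qplus_ae_int[OF fi gi]
proof eventually_elim
  case (elim p)
  have fm: "f \<in> borel_measurable borel" using int_borel[OF fi] .
  have gm: "g \<in> borel_measurable borel" using int_borel[OF gi] .
  note [measurable (raw)] = meas_Zp[OF fm gm]
  have Zm: "(\<lambda>(q, th, ph). Zp f g p q th ph) \<in> borel_measurable borel"
    unfolding borel_prod[symmetric] case_prod_beta by measurable
  show ?case unfolding Qplus_eq by (rule nest3[OF Zm elim])
qed

lemma Qplus_diff1:
  assumes f1: "integrable lborel f1" and f2: "integrable lborel f2" and gi: "integrable lborel g"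
  shows "AE p in lborel. Qplus S A B f1 g p - Qplus S A B f2 g p = Qplus S A B (\<lambda>x. f1 x - f2 x) g p"
proof -
  have f12: "integrable lborel (\<lambda>x. f1 x - f2 x)" using f1 f2 by simp
  show ?thesis using Qplus_rep[OF f1 gi] Qplus_rep[OF f2 gi] Qplus_rep[OF f12 gi] Qplus_ae_int[OF f1 gi] Qplus_ae_int[OF f2 gi]
  proof eventually_elim
    case (elim p)
    have eq: "(\<lambda>(q, th, ph). Zp (\<lambda>x. f1 x - f2 x) g p q th ph) = (\<lambda>x. (\<lambda>(q, th, ph). Zp f1 g p q th ph) x - (\<lambda>(q, th, ph). Zp f2 g p q th ph) x)"
      by (auto simp: Zp_def fun_eq_iff algebra_simps)
    show ?case unfolding elim(1,2,3) eq by (rule Bochner_Integration.integral_diff[OF elim(4) elim(5), symmetric])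
  qed
qed

lemma Qplus_diff2:
  assumes fi: "integrable lborel f" and g1: "integrable lborel g1" and g2: "integrable lborel g2"
  shows "AE p in lborel. Qplus S A B f g1 p - Qplus S A B f g2 p = Qplus S A B f (\<lambda>x. g1 x - g2 x) p"
proof -
  have g12: "integrable lborel (\<lambda>x. g1 x - g2 x)" using g1 g2 by simp
  show ?thesis using Qplus_rep[OF fi g1] Qplus_rep[OF fi g2] Qplus_rep[OF fi g12] Qplus_ae_int[OF fi g1] Qplus_ae_int[OF fi g2]
  proof eventually_elim
    case (elim p)
    have eq: "(\<lambda>(q, th, ph). Zp f (\<lambda>x. g1 x - g2 x) p q th ph) = (\<lambda>x. (\<lambda>(q, th, ph). Zp f g1 p q th ph) x - (\<lambda>(q, th, ph). Zp f g2 p q th ph) x)"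
      by (auto simp: Zp_def fun_eq_iff algebra_simps)
    show ?case unfolding elim(1,2,3) eq by (rule Bochner_Integration.integral_diff[OF elim(4) elim(5), symmetric])
  qed
qed

definition SK :: "vec3 \<Rightarrow> vec3 \<Rightarrow> real" where
  "SK p q = sphere_int A B (\<lambda>w. Kc p q w)"

definition nu :: "(vec3 \<Rightarrow> real) \<Rightarrow> vec3 \<Rightarrow> real" where
  "nu g p = Qminus S A B (\<lambda>_. 1) g p"

lemma W_le: "A * B\<^sup>2 / P q \<le> A * B\<^sup>2"
proof -
  have "A * B\<^sup>2 * 1 \<le> A * B\<^sup>2 * P q" by (rule mult_left_mono[OF p0_ge1]) (use A_pos B_pos in simp)
  then show ?thesis using p0_pos[of A B q] by (simp add: divide_le_eq)
qed

lemma W_nonneg: "0 \<le> A * B\<^sup>2 / P q" using p0_pos[of A B q] A_pos by simp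

lemma nu_eq: "nu g p = (LINT q|lborel. (A * B\<^sup>2 / P q * g q) * SK p q)"
  unfolding nu_def Qminus_def SK_def Kc_def
  by (rule Bochner_Integration.integral_cong) (simp_all add: sphere_int_cmult_assoc sphere_int_cmult)

lemma Qminus_fac: "Qminus S A B f g p = f p * nu g p"
proof -
  have "Qminus S A B f g p = (LINT q|lborel. f p * ((A * B\<^sup>2 / P q * g q) * SK p q))"
    unfolding Qminus_def SK_def Kc_def
    by (rule Bochner_Integration.integral_cong) (simp_all add: sphere_int_cmult_assoc sphere_int_cmult)
  also have "\<dots> = f p * nu g p" unfolding nu_eq by (rule integral_mult_right_zero)
  finally show ?thesis .
qed

lemma SK_nonneg: "0 \<le> SK p q"
  unfolding SK_def sphere_int_eq
  by (intro integral_nonneg_AE AE_I2 mult_nonneg_nonneg swt_nonneg Kc_nonneg)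

lemma SK_le: "SK p q \<le> 2 * pi\<^sup>2 * C1"
proof -
  have "ennreal \<bar>SK p q\<bar> \<le> (\<integral>\<^sup>+th. \<integral>\<^sup>+ph. ennreal (swt th ph * \<bar>Kc p q (sph A B th ph)\<bar>) \<partial>lborel \<partial>lborel)"
    unfolding SK_def by (rule sphere_int_abs_le)
  also have "\<dots> \<le> (\<integral>\<^sup>+th. \<integral>\<^sup>+ph. ennreal (swt th ph) * ennreal C1 \<partial>lborel \<partial>lborel)"
  proof (intro nn_integral_mono)
    fix th ph
    have "swt th ph * \<bar>Kc p q (sph A B th ph)\<bar> \<le> swt th ph * C1"
      using Kc_le Kc_nonneg swt_nonneg by (simp add: mult_left_mono)
    then show "ennreal (swt th ph * \<bar>Kc p q (sph A B th ph)\<bar>) \<le> ennreal (swt th ph) * ennreal C1"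
      using swt_nonneg by (simp add: ennreal_mult'[symmetric] ennreal_leI)
  qed
  also have "\<dots> = (\<integral>\<^sup>+th. \<integral>\<^sup>+ph. ennreal (swt th ph) \<partial>lborel \<partial>lborel) * ennreal C1"
    by (simp add: nn_integral_multc)
  also have "\<dots> \<le> ennreal (2 * pi\<^sup>2) * ennreal C1"
    by (intro mult_right_mono swt_total) simp
  also have "\<dots> = ennreal (2 * pi\<^sup>2 * C1)" by (simp add: ennreal_mult[symmetric] C1_nonneg)
  finally have "\<bar>SK p q\<bar> \<le> 2 * pi\<^sup>2 * C1" using C1_nonneg by (simp add: ennreal_le_iff)
  then show ?thesis by simp
qed

lemma SK_meas[measurable]: "(\<lambda>x. SK (f x) (g x)) \<in> borel_measurable M" if [measurable]: "f \<in> borel_measurable M" "g \<in> borel_measurable M"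
proof -
  have "(\<lambda>(p, q). SK p q) \<in> borel_measurable (borel \<Otimes>\<^sub>M borel)"
    unfolding SK_def sphere_int_eq case_prod_beta by measurable
  then have m: "(\<lambda>(p, q). SK p q) \<in> borel_measurable borel" by (simp add: borel_prod)
  show ?thesis using meas_H2[OF m that] .
qed

lemma nu_integrable:
  assumes gi: "integrable lborel g"
  shows "integrable lborel (\<lambda>q. (A * B\<^sup>2 / P q * g q) * SK p q)"
proof (rule Bochner_Integration.integrable_bound[where f="\<lambda>q. kap * g q"])
  show "integrable lborel (\<lambda>q. kap * g q)" using gi by simp
  have gm: "g \<in> borel_measurable borel" using int_borel[OF gi] .
  note [measurable (raw)] = meas_F1[OF gm]
  show "(\<lambda>q. A * B\<^sup>2 / P q * g q * SK p q) \<in> borel_measurable lborel" by measurable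
  show "AE x in lborel. norm (A * B\<^sup>2 / P x * g x * SK p x) \<le> norm (kap * g x)"
  proof (intro AE_I2)
    fix q
    note a = W_le[of q] and b = W_nonneg[of q]
    have "\<bar>A * B\<^sup>2 / P q * g q * SK p q\<bar> = (A * B\<^sup>2 / P q) * SK p q * \<bar>g q\<bar>"
      by (simp only: abs_mult abs_of_nonneg[OF b] abs_of_nonneg[OF SK_nonneg]) (simp add: ac_simps)
    also have "\<dots> \<le> (A * B\<^sup>2) * (2 * pi\<^sup>2 * C1) * \<bar>g q\<bar>"
      by (intro mult_right_mono mult_mono a SK_le b SK_nonneg) (use A_pos B_pos in auto)
    finally show "norm (A * B\<^sup>2 / P q * g q * SK p q) \<le> norm (kap * g q)"
      using kap_nonneg by (simp add: kap_def abs_mult abs_of_pos[OF A_pos] abs_of_nonneg[OF C1_nonneg])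
  qed
qed

lemma nu_bound:
  assumes gi: "integrable lborel g"
  shows "\<bar>nu g p\<bar> \<le> kap * L1norm g"
proof -
  have "\<bar>nu g p\<bar> \<le> (LINT q|lborel. \<bar>(A * B\<^sup>2 / P q * g q) * SK p q\<bar>)"
    unfolding nu_eq by (rule integral_abs_bound)
  also have "\<dots> \<le> (LINT q|lborel. kap * \<bar>g q\<bar>)"
  proof (rule integral_mono)
    show "integrable lborel (\<lambda>q. \<bar>(A * B\<^sup>2 / P q * g q) * SK p q\<bar>)" using integrable_abs[OF nu_integrable[OF gi]] .
    show "integrable lborel (\<lambda>q. kap * \<bar>g q\<bar>)" using gi by simp
    fix q
    note a = W_le[of q] and b = W_nonneg[of q]
    have "\<bar>A * B\<^sup>2 / P q * g q * SK p q\<bar> = (A * B\<^sup>2 / P q) * SK p q * \<bar>g q\<bar>"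
      by (simp only: abs_mult abs_of_nonneg[OF b] abs_of_nonneg[OF SK_nonneg]) (simp add: ac_simps)
    also have "\<dots> \<le> (A * B\<^sup>2) * (2 * pi\<^sup>2 * C1) * \<bar>g q\<bar>"
      by (intro mult_right_mono mult_mono a SK_le b SK_nonneg) (use A_pos B_pos in auto)
    finally show "\<bar>A * B\<^sup>2 / P q * g q * SK p q\<bar> \<le> kap * \<bar>g q\<bar>" by (simp add: kap_def)
  qed
  also have "\<dots> = kap * L1norm g" by (simp add: L1norm_def)
  finally show ?thesis .
qed

lemma nu_nonneg:
  assumes "AE q in lborel. 0 \<le> g q"
  shows "0 \<le> nu g p"
  unfolding nu_eq
proof (intro integral_nonneg_AE)
  show "AE q in lborel. 0 \<le> A * B\<^sup>2 / P q * g q * SK p q" using assms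
  proof eventually_elim
    case (elim q)
    show ?case by (intro mult_nonneg_nonneg) (use elim W_nonneg[of q] SK_nonneg[of p q] in auto)
  qed
qed

lemma nu_diff:
  assumes g1: "integrable lborel g1" and g2: "integrable lborel g2"
  shows "nu g1 p - nu g2 p = nu (\<lambda>x. g1 x - g2 x) p"
proof -
  have "nu (\<lambda>x. g1 x - g2 x) p = (LINT q|lborel. (A * B\<^sup>2 / P q * g1 q) * SK p q - (A * B\<^sup>2 / P q * g2 q) * SK p q)"
  proof -
    have gen: "\<And>W x y K::real. (W * (x - y)) * K = W * x * K - W * y * K" by (simp add: algebra_simps)
    show ?thesis unfolding nu_eq by (rule Bochner_Integration.integral_cong[OF refl gen])
  qed
  also have "\<dots> = nu g1 p - nu g2 p"
    unfolding nu_eq by (rule Bochner_Integration.integral_diff[OF nu_integrable[OF g1] nu_integrable[OF g2]])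
  finally show ?thesis by simp
qed

lemma nu_meas:
  assumes gm: "g \<in> borel_measurable borel"
  shows "(\<lambda>p. nu g p) \<in> borel_measurable borel"
proof -
  note [measurable (raw)] = meas_F1[OF gm]
  show ?thesis unfolding nu_eq by measurable
qed

end

lemma L1_nn: "integrable lborel (f :: vec3 \<Rightarrow> real) \<Longrightarrow> (\<integral>\<^sup>+p. ennreal \<bar>f p\<bar> \<partial>lborel) = ennreal (L1norm f)"
  unfolding L1norm_def by (rule nn_integral_eq_integral) auto

lemma L1_nonneg: "0 \<le> L1norm f"
  unfolding L1norm_def by (rule integral_nonneg_AE) auto

lemma int_from_nn:
  fixes f :: "vec3 \<Rightarrow> real"
  assumes fm: "f \<in> borel_measurable borel" and c: "0 \<le> c"
    and le: "(\<integral>\<^sup>+p. ennreal \<bar>f p\<bar> \<partial>lborel) \<le> ennreal c"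
  shows "integrable lborel f" "L1norm f \<le> c"
proof -
  show fi: "integrable lborel f"
    using le fm by (subst integrable_iff_bounded) (auto simp: top.not_eq_extremum le_less_trans[OF _ ennreal_less_top])
  have "ennreal (L1norm f) \<le> ennreal c" using le L1_nn[OF fi] by simp
  then show "L1norm f \<le> c" using c by (simp add: ennreal_le_iff)
qed

lemma L1_diff_tri:
  assumes "integrable lborel f" "integrable lborel g" "integrable lborel h"
  shows "L1norm (\<lambda>x. f x - h x) \<le> L1norm (\<lambda>x. f x - g x) + L1norm (\<lambda>x. g x - h x)"
proof -
  have "L1norm (\<lambda>x. f x - h x) \<le> (LINT x|lborel. \<bar>f x - g x\<bar> + \<bar>g x - h x\<bar>)"
    unfolding L1norm_def by (rule integral_mono) (use assms in auto)
  also have "\<dots> = L1norm (\<lambda>x. f x - g x) + L1norm (\<lambda>x. g x - h x)"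
    unfolding L1norm_def by (rule Bochner_Integration.integral_add) (use assms in auto)
  finally show ?thesis .
qed


lemma uniq_alg:
  fixes sn Pp u w v Quu Qwu Qww Q1 Q2 nuu nuw nud a b :: real
  assumes Pp: "1 \<le> Pp" and sn: "0 \<le> sn"
    and e1: "sn * u - (Quu - u * nuu) / Pp = v" and e2: "sn * w - (Qww - w * nuw) / Pp = v"
    and e3: "Quu - Qwu = Q1" and e4: "Qwu - Qww = Q2" and e5: "nuu - nuw = nud"
    and ba: "\<bar>nuu\<bar> \<le> a" and bb: "\<bar>nud\<bar> \<le> b"
  shows "sn * \<bar>u - w\<bar> \<le> \<bar>Q1 / Pp\<bar> + \<bar>Q2 / Pp\<bar> + a * \<bar>u - w\<bar> + b * \<bar>w\<bar>"
proof -
  have P0: "Pp \<noteq> 0" using Pp by simp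
  have "sn * (u - w) = (Quu - u * nuu) / Pp - (Qww - w * nuw) / Pp" using e1 e2 by (simp add: algebra_simps)
  also have "\<dots> = Q1 / Pp + Q2 / Pp - ((u - w) * nuu) / Pp - (w * nud) / Pp"
  proof -
    have e5': "nuu = nud + nuw" using e5 by simp
    have e3': "Quu = Q1 + Qwu" using e3 by simp
    have e4': "Qww = Qwu - Q2" using e4 by simp
    show ?thesis unfolding e5' e3' e4' using P0 by (simp add: field_simps)
  qed
  finally have eq: "sn * (u - w) = Q1 / Pp + Q2 / Pp - ((u - w) * nuu) / Pp - (w * nud) / Pp" .
  have dv: "\<bar>x / Pp\<bar> \<le> \<bar>x\<bar>" for x
  proof -
    have "\<bar>x\<bar> * 1 \<le> \<bar>x\<bar> * Pp" by (rule mult_left_mono[OF Pp]) simp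
    then show ?thesis using Pp by (simp add: divide_le_eq abs_divide)
  qed
  have t3: "\<bar>((u - w) * nuu) / Pp\<bar> \<le> a * \<bar>u - w\<bar>"
  proof -
    have "\<bar>((u - w) * nuu) / Pp\<bar> \<le> \<bar>(u - w) * nuu\<bar>"
      by (rule dv)
    also have "\<dots> \<le> \<bar>u - w\<bar> * a" unfolding abs_mult by (rule mult_left_mono[OF ba]) simp
    finally show ?thesis by (simp add: mult.commute)
  qed
  have t4: "\<bar>(w * nud) / Pp\<bar> \<le> b * \<bar>w\<bar>"
  proof -
    have "\<bar>(w * nud) / Pp\<bar> \<le> \<bar>w * nud\<bar>"
      by (rule dv)
    also have "\<dots> \<le> \<bar>w\<bar> * b" unfolding abs_mult by (rule mult_left_mono[OF bb]) simp
    finally show ?thesis by (simp add: mult.commute)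
  qed
  have tri4: "\<bar>a1 + a2 - a3 - a4\<bar> \<le> \<bar>a1\<bar> + \<bar>a2\<bar> + \<bar>a3\<bar> + \<bar>a4\<bar>" for a1 a2 a3 a4 :: real
    unfolding abs_le_iff using abs_ge_self[of a1] abs_ge_minus_self[of a1] abs_ge_self[of a2] abs_ge_minus_self[of a2]
      abs_ge_self[of a3] abs_ge_minus_self[of a3] abs_ge_self[of a4] abs_ge_minus_self[of a4] by linarith
  have "sn * \<bar>u - w\<bar> = \<bar>sn * (u - w)\<bar>" using sn by (simp add: abs_mult)
  also have "\<dots> \<le> \<bar>Q1 / Pp\<bar> + \<bar>Q2 / Pp\<bar> + \<bar>((u - w) * nuu) / Pp\<bar> + \<bar>(w * nud) / Pp\<bar>"
    unfolding eq by (rule tri4)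
  also have "\<dots> \<le> \<bar>Q1 / Pp\<bar> + \<bar>Q2 / Pp\<bar> + a * \<bar>u - w\<bar> + b * \<bar>w\<bar>" using t3 t4 by simp
  finally show ?thesis .
qed

lemma int_add4:
  fixes f1 f2 f3 f4 :: "'a \<Rightarrow> real"
  assumes "integrable M f1" "integrable M f2" "integrable M f3" "integrable M f4"
  shows "(LINT x|M. f1 x + f2 x + f3 x + f4 x) = integral\<^sup>L M f1 + integral\<^sup>L M f2 + integral\<^sup>L M f3 + integral\<^sup>L M f4"
  using assms by simp

context qs begin

lemma Qplus_nonneg:
  assumes "\<And>x. 0 \<le> f x" "\<And>x. 0 \<le> g x"
  shows "0 \<le> Qplus S A B f g p"
  unfolding Qplus_eq Zp_def
  by (intro integral_nonneg_AE AE_I2 mult_nonneg_nonneg W_nonneg swt_nonneg Kc_nonneg assms)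

lemma QP_int:
  assumes fi: "integrable lborel f" and gi: "integrable lborel g"
  shows "integrable lborel (\<lambda>p. Qplus S A B f g p / P p)"
    and "L1norm (\<lambda>p. Qplus S A B f g p / P p) \<le> kap * L1norm f * L1norm g"
proof -
  have fm: "f \<in> borel_measurable borel" using int_borel[OF fi] .
  have gm: "g \<in> borel_measurable borel" using int_borel[OF gi] .
  have m: "(\<lambda>p. Qplus S A B f g p / P p) \<in> borel_measurable borel"
    using Qplus_meas[OF fm gm] by measurable
  have "(\<integral>\<^sup>+p. ennreal \<bar>Qplus S A B f g p / P p\<bar> \<partial>lborel) = (\<integral>\<^sup>+p. ennreal (\<bar>Qplus S A B f g p\<bar> / P p) \<partial>lborel)"
    using p0_pos[of A B] by (simp add: abs_divide abs_of_pos)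
  also have "\<dots> \<le> ennreal kap * (\<integral>\<^sup>+p. ennreal \<bar>f p\<bar> \<partial>lborel) * (\<integral>\<^sup>+q. ennreal \<bar>g q\<bar> \<partial>lborel)"
    by (rule Qplus_L1[OF fm gm])
  also have "\<dots> = ennreal (kap * L1norm f * L1norm g)"
    using kap_nonneg L1_nonneg by (simp add: L1_nn[OF fi] L1_nn[OF gi] ennreal_mult)
  finally have le: "(\<integral>\<^sup>+p. ennreal \<bar>Qplus S A B f g p / P p\<bar> \<partial>lborel) \<le> ennreal (kap * L1norm f * L1norm g)" .
  have c: "0 \<le> kap * L1norm f * L1norm g" using kap_nonneg L1_nonneg by simp
  show "integrable lborel (\<lambda>p. Qplus S A B f g p / P p)" by (rule int_from_nn(1)[OF m c le])
  show "L1norm (\<lambda>p. Qplus S A B f g p / P p) \<le> kap * L1norm f * L1norm g" by (rule int_from_nn(2)[OF m c le])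
qed

lemma Qcoll_eq: "Qcoll S A B f f p = Qplus S A B f f p - f p * nu f p"
  by (simp add: Qcoll_def Qminus_fac)

lemma uniq:
  fixes u w v :: "vec3 \<Rightarrow> real" and sn r :: real
  assumes ui: "integrable lborel u" and wi: "integrable lborel w"
    and ur: "L1norm u \<le> r" and wr: "L1norm w \<le> r"
    and big: "4 * kap * r < sn"
    and su: "AE p in lborel. sn * u p - Qcoll S A B u u p / P p = v p"
    and sw: "AE p in lborel. sn * w p - Qcoll S A B w w p / P p = v p"
  shows "AE p in lborel. w p = u p"
proof -
  define d where "d = (\<lambda>x. u x - w x)"
  have di: "integrable lborel d" unfolding d_def using ui wi by simp
  have r0: "0 \<le> r" using ur L1_nonneg[of u] by simp
  have sn0: "0 \<le> sn"
  proof -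
    have "0 \<le> 4 * kap * r" using kap_nonneg r0 by simp
    then show ?thesis using big by linarith
  qed
  have ae: "AE p in lborel. sn * \<bar>d p\<bar> \<le> \<bar>Qplus S A B d u p / P p\<bar> + \<bar>Qplus S A B w d p / P p\<bar>
        + (kap * L1norm u) * \<bar>d p\<bar> + (kap * L1norm d) * \<bar>w p\<bar>"
    using su sw Qplus_diff1[OF ui wi ui] Qplus_diff2[OF wi ui wi]
  proof eventually_elim
    case (elim p)
    show ?case unfolding d_def
    proof (rule uniq_alg[OF p0_ge1 sn0])
      show "sn * u p - (Qplus S A B u u p - u p * nu u p) / P p = v p" using elim(1) by (simp add: Qcoll_eq)
      show "sn * w p - (Qplus S A B w w p - w p * nu w p) / P p = v p" using elim(2) by (simp add: Qcoll_eq)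
      show "Qplus S A B u u p - Qplus S A B w u p = Qplus S A B (\<lambda>x. u x - w x) u p" using elim(3) .
      show "Qplus S A B w u p - Qplus S A B w w p = Qplus S A B w (\<lambda>x. u x - w x) p" using elim(4) .
      show "nu u p - nu w p = nu (\<lambda>x. u x - w x) p" by (rule nu_diff[OF ui wi])
      show "\<bar>nu u p\<bar> \<le> kap * L1norm u" by (rule nu_bound[OF ui])
      show "\<bar>nu (\<lambda>x. u x - w x) p\<bar> \<le> kap * L1norm (\<lambda>x. u x - w x)" by (rule nu_bound) (use di d_def in simp)
    qed
  qed
  have i1: "integrable lborel (\<lambda>p. Qplus S A B d u p / P p)" by (rule QP_int(1)[OF di ui])
  have i2: "integrable lborel (\<lambda>p. Qplus S A B w d p / P p)" by (rule QP_int(1)[OF wi di])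
  have "sn * L1norm d = (LINT p|lborel. sn * \<bar>d p\<bar>)" by (simp add: L1norm_def)
  also have "\<dots> \<le> (LINT p|lborel. \<bar>Qplus S A B d u p / P p\<bar> + \<bar>Qplus S A B w d p / P p\<bar>
        + (kap * L1norm u) * \<bar>d p\<bar> + (kap * L1norm d) * \<bar>w p\<bar>)"
    by (rule integral_mono_AE[OF _ _ ae])
       (intro Bochner_Integration.integrable_add integrable_abs integrable_mult_right i1 i2 di wi)+
  also have "\<dots> = L1norm (\<lambda>p. Qplus S A B d u p / P p) + L1norm (\<lambda>p. Qplus S A B w d p / P p)
        + (kap * L1norm u) * L1norm d + (kap * L1norm d) * L1norm w"
    unfolding int_add4[OF integrable_abs[OF i1] integrable_abs[OF i2] integrable_mult_right[OF integrable_abs[OF di]]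
       integrable_mult_right[OF integrable_abs[OF wi]]]
    by (simp only: L1norm_def integral_mult_right_zero)
  also have "\<dots> \<le> kap * L1norm d * L1norm u + kap * L1norm w * L1norm d
        + (kap * L1norm u) * L1norm d + (kap * L1norm d) * L1norm w"
    using QP_int(2)[OF di ui] QP_int(2)[OF wi di] by (simp add: algebra_simps)
  also have "\<dots> = kap * L1norm d * (2 * L1norm u + 2 * L1norm w)" by (simp add: algebra_simps)
  also have "\<dots> \<le> kap * L1norm d * (4 * r)"
    by (intro mult_left_mono mult_nonneg_nonneg kap_nonneg L1_nonneg) (use ur wr in auto)
  finally have "sn * L1norm d \<le> (4 * kap * r) * L1norm d" by (simp add: algebra_simps)
  then have "L1norm d \<le> 0"
  proof -
    assume h: "sn * L1norm d \<le> (4 * kap * r) * L1norm d"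
    show ?thesis
    proof (rule ccontr)
      assume "\<not> L1norm d \<le> 0"
      then have "0 < L1norm d" by simp
      then have "(4 * kap * r) * L1norm d < sn * L1norm d" by (rule mult_strict_right_mono[OF big])
      then show False using h by simp
    qed
  qed
  then have "L1norm d = 0" using L1_nonneg[of d] by simp
  then have "AE p in lborel. \<bar>d p\<bar> = 0"
    unfolding L1norm_def using integral_nonneg_eq_0_iff_AE[of lborel "\<lambda>p. \<bar>d p\<bar>"] di by auto
  then show ?thesis by eventually_elim (simp add: d_def)
qed

end

lemma tele:
  fixes a :: "nat \<Rightarrow> real"
  assumes s: "summable (\<lambda>i. \<bar>a (Suc i) - a i\<bar>)"
  shows "a \<longlonglongrightarrow> lim a" and "\<bar>lim a - a k\<bar> \<le> (\<Sum>i. \<bar>a (Suc (i + k)) - a (i + k)\<bar>)"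
proof -
  have s0: "summable (\<lambda>i. a (Suc i) - a i)" using summable_rabs_cancel[OF s] .
  define L where "L = a 0 + (\<Sum>i. a (Suc i) - a i)"
  have "(\<lambda>k. a 0 + (\<Sum>i<k. a (Suc i) - a i)) \<longlonglongrightarrow> L"
    unfolding L_def by (intro tendsto_add tendsto_const summable_LIMSEQ s0)
  then have conv: "a \<longlonglongrightarrow> L" by (simp add: sum_lessThan_telescope)
  then have limL: "lim a = L" by (rule limI)
  show "a \<longlonglongrightarrow> lim a" using conv limL by simp
  have "lim a - a k = (\<Sum>i. a (Suc (i + k)) - a (i + k))"
    unfolding limL L_def using suminf_split_initial_segment[OF s0, of k]
    by (simp add: sum_lessThan_telescope)
  also have "\<bar>\<dots>\<bar> \<le> (\<Sum>i. \<bar>a (Suc (i + k)) - a (i + k)\<bar>)"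
    by (rule summable_rabs) (use summable_ignore_initial_segment[OF s, of k] in simp)
  finally show "\<bar>lim a - a k\<bar> \<le> (\<Sum>i. \<bar>a (Suc (i + k)) - a (i + k)\<bar>)" .
qed

lemma le_geom_zero:
  fixes x c :: real
  assumes "\<And>k. x \<le> c * (1/2)^k"
  shows "x \<le> 0"
proof -
  have "(\<lambda>k. c * (1/2::real)^k) \<longlonglongrightarrow> c * 0"
    by (intro tendsto_mult tendsto_const LIMSEQ_power_zero) simp
  then show ?thesis using assms by (intro LIMSEQ_le_const[of _ 0]) auto
qed

lemma frac_alg:
  fixes Xu Xw Yu Yw s :: real
  assumes "0 \<le> Xw" "s \<le> Yu" "s \<le> Yw" "0 < s"
  shows "\<bar>Xu / Yu - Xw / Yw\<bar> \<le> \<bar>Xu - Xw\<bar> / s + Xw * \<bar>Yu - Yw\<bar> / s\<^sup>2"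
proof -
  have Yu: "0 < Yu" and Yw: "0 < Yw" using assms by auto
  have eq: "Xu / Yu - Xw / Yw = (Xu - Xw) / Yu + Xw * (Yw - Yu) / (Yu * Yw)"
    using Yu Yw by (simp add: field_simps)
  have t1: "\<bar>(Xu - Xw) / Yu\<bar> \<le> \<bar>Xu - Xw\<bar> / s"
    using Yu assms by (simp add: abs_divide frac_le)
  have "s\<^sup>2 \<le> Yu * Yw" using assms by (simp add: power2_eq_square mult_mono)
  then have t2: "\<bar>Xw * (Yw - Yu) / (Yu * Yw)\<bar> \<le> Xw * \<bar>Yu - Yw\<bar> / s\<^sup>2"
    using Yu Yw assms by (simp add: abs_divide abs_mult frac_le abs_minus_commute)
  show ?thesis unfolding eq using t1 t2 abs_triangle_ineq[of "(Xu - Xw) / Yu" "Xw * (Yw - Yu) / (Yu * Yw)"] by linarith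
qed

locale fp = qs +
  fixes r sn :: real and v :: "vec3 \<Rightarrow> real"
  assumes r_pos: "r > 0" and vi: "integrable lborel v" and v_ae: "AE p in lborel. 0 \<le> v p"
    and vr: "L1norm v \<le> r"
    and sn_big: "1 + 6 * kap * r + 2 * kap\<^sup>2 * r\<^sup>2 \<le> sn"
begin

definition "vp p = max (v p) 0"
definition "Xf u p = vp p + Qplus S A B u u p / P p"
definition "Yf u p = sn + nu u p / P p"
definition "Phi u p = Xf u p / Yf u p"
definition "Good u \<longleftrightarrow> integrable lborel u \<and> (\<forall>p. 0 \<le> u p) \<and> L1norm u \<le> r"

lemma sn_aux: "0 \<le> 6 * kap * r" "0 \<le> 2 * kap\<^sup>2 * r\<^sup>2"
  using kap_nonneg r_pos by auto

lemma sn_ge1: "1 \<le> sn"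
  using sn_big sn_aux by linarith

lemma vp_ae: "AE p in lborel. vp p = v p"
  using v_ae by eventually_elim (simp add: vp_def)

lemma vp_int: "integrable lborel vp"
proof -
  have "integrable lborel (\<lambda>p. max (v p) 0)" using vi by (intro integrable_max) auto
  then show ?thesis by (simp add: vp_def[abs_def])
qed

lemma vp_nonneg: "0 \<le> vp p" by (simp add: vp_def)

lemma vp_L1: "L1norm vp \<le> r"
proof -
  have "L1norm vp = L1norm v" unfolding L1norm_def
    by (rule integral_cong_AE) (use vp_int vi in \<open>auto intro: eventually_mono[OF vp_ae]\<close>)
  then show ?thesis using vr by simp
qed

lemma Good_meas: "Good u \<Longrightarrow> u \<in> borel_measurable borel"
  unfolding Good_def using int_borel by blast

lemma Good_nu: "Good u \<Longrightarrow> 0 \<le> nu u p"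
  unfolding Good_def by (intro nu_nonneg AE_I2) auto

lemma Good_Qp: "Good u \<Longrightarrow> 0 \<le> Qplus S A B u u p"
  unfolding Good_def by (intro Qplus_nonneg) auto

lemma Good_Y: "Good u \<Longrightarrow> sn \<le> Yf u p"
  unfolding Yf_def using Good_nu[of u p] p0_pos[of A B p] by simp

lemma Good_X_nonneg: "Good u \<Longrightarrow> 0 \<le> Xf u p"
  unfolding Xf_def using Good_Qp[of u p] p0_pos[of A B p] vp_nonneg[of p] by simp

lemma Good_X_int: assumes "Good u" shows "integrable lborel (Xf u)" "L1norm (Xf u) \<le> r + kap * r\<^sup>2"
proof -
  have ui: "integrable lborel u" and ur: "L1norm u \<le> r" using assms by (auto simp: Good_def)
  have qi: "integrable lborel (\<lambda>p. Qplus S A B u u p / P p)" by (rule QP_int(1)[OF ui ui])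
  show xi: "integrable lborel (Xf u)" unfolding Xf_def[abs_def] using vp_int qi by simp
  have "L1norm (Xf u) = (LINT p|lborel. vp p + Qplus S A B u u p / P p)"
    unfolding L1norm_def by (rule Bochner_Integration.integral_cong) (use Good_X_nonneg[OF assms] in \<open>auto simp: Xf_def\<close>)
  also have "\<dots> = (LINT p|lborel. vp p) + (LINT p|lborel. Qplus S A B u u p / P p)"
    using vp_int qi by simp
  also have "\<dots> \<le> L1norm vp + L1norm (\<lambda>p. Qplus S A B u u p / P p)"
  proof (intro add_mono)
    show "(LINT p|lborel. vp p) \<le> L1norm vp"
      unfolding L1norm_def by (rule integral_mono[OF vp_int integrable_abs[OF vp_int]]) simp
    show "(LINT p|lborel. Qplus S A B u u p / P p) \<le> L1norm (\<lambda>p. Qplus S A B u u p / P p)"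
      unfolding L1norm_def by (rule integral_mono[OF qi integrable_abs[OF qi]]) (rule abs_ge_self)
  qed
  also have "\<dots> \<le> r + kap * L1norm u * L1norm u"
    using vp_L1 QP_int(2)[OF ui ui] by simp
  also have "\<dots> \<le> r + kap * r\<^sup>2"
  proof -
    have "L1norm u * L1norm u \<le> r * r" using ur L1_nonneg[of u] by (intro mult_mono) auto
    then have "kap * (L1norm u * L1norm u) \<le> kap * (r * r)" using kap_nonneg by (rule mult_left_mono)
    then show ?thesis by (simp add: power2_eq_square mult.assoc)
  qed
  finally show "L1norm (Xf u) \<le> r + kap * r\<^sup>2" .
qed

lemma Good_Phi_meas: "Good u \<Longrightarrow> Phi u \<in> borel_measurable borel"
proof -
  assume g: "Good u"
  have um: "u \<in> borel_measurable borel" using Good_meas[OF g] .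
  have vpm: "vp \<in> borel_measurable borel" using int_borel[OF vp_int] .
  show ?thesis unfolding Phi_def[abs_def] Xf_def Yf_def
    using Qplus_meas[OF um um] nu_meas[OF um] vpm by measurable
qed

lemma Good_Phi: assumes g: "Good u" shows "Good (Phi u)"
proof -
  have pn: "0 \<le> Phi u p" for p
    unfolding Phi_def using Good_X_nonneg[OF g, of p] Good_Y[OF g, of p] sn_ge1 by simp
  have bnd: "\<bar>Phi u p\<bar> \<le> Xf u p / sn" for p
    unfolding Phi_def using Good_X_nonneg[OF g, of p] Good_Y[OF g, of p] sn_ge1
    by (simp add: abs_divide frac_le)
  have xi: "integrable lborel (Xf u)" using Good_X_int(1)[OF g] .
  have phii: "integrable lborel (Phi u)"
  proof (rule Bochner_Integration.integrable_bound[where f="\<lambda>p. Xf u p / sn"])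
    show "integrable lborel (\<lambda>p. Xf u p / sn)" using xi by simp
    show "Phi u \<in> borel_measurable lborel" using Good_Phi_meas[OF g] by simp
    show "AE x in lborel. norm (Phi u x) \<le> norm (Xf u x / sn)"
      using bnd Good_X_nonneg[OF g] sn_ge1 by (auto intro!: AE_I2 simp: abs_divide)
  qed
  have "L1norm (Phi u) \<le> (LINT p|lborel. Xf u p / sn)"
    unfolding L1norm_def by (rule integral_mono) (use phii xi bnd in auto)
  also have "\<dots> = L1norm (Xf u) / sn"
    unfolding L1norm_def using Good_X_nonneg[OF g] by simp
  also have "\<dots> \<le> (r + kap * r\<^sup>2) / sn"
    using Good_X_int(2)[OF g] sn_ge1 by (simp add: divide_right_mono)
  also have "\<dots> \<le> r"
  proof -
    have "r + kap * r\<^sup>2 = r * (1 + kap * r)" by (simp add: power2_eq_square algebra_simps)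
    also have "\<dots> \<le> r * sn"
    proof (intro mult_left_mono)
      have "kap * r \<le> 6 * kap * r" using kap_nonneg r_pos by simp
      then show "1 + kap * r \<le> sn" using sn_big sn_aux by linarith
    qed (use r_pos in auto)
    finally show ?thesis using sn_ge1 by (simp add: divide_le_eq)
  qed
  finally show ?thesis unfolding Good_def using phii pn by auto
qed

lemma contr:
  assumes gu: "Good u" and gw: "Good w"
  shows "L1norm (\<lambda>p. Phi u p - Phi w p) \<le> (1/2) * L1norm (\<lambda>p. u p - w p)"
proof -
  have ui: "integrable lborel u" and ur: "L1norm u \<le> r" using gu by (auto simp: Good_def)
  have wi: "integrable lborel w" and wr: "L1norm w \<le> r" using gw by (auto simp: Good_def)
  define d where "d = (\<lambda>x. u x - w x)"
  have di: "integrable lborel d" unfolding d_def using ui wi by simp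
  define c where "c = kap * L1norm d"
  have c0: "0 \<le> c" unfolding c_def using kap_nonneg L1_nonneg by simp
  have sn0: "0 < sn" using sn_ge1 by simp
  have ae: "AE p in lborel. \<bar>Phi u p - Phi w p\<bar> \<le> (\<bar>Qplus S A B d u p / P p\<bar> + \<bar>Qplus S A B w d p / P p\<bar>) / sn
       + Xf w p * c / sn\<^sup>2"
    using Qplus_diff1[OF ui wi ui] Qplus_diff2[OF wi ui wi]
  proof eventually_elim
    case (elim p)
    have P1: "1 \<le> P p" by (rule p0_ge1)
    have e1: "Xf u p - Xf w p = Qplus S A B d u p / P p + Qplus S A B w d p / P p"
      unfolding Xf_def d_def using elim by (simp add: diff_divide_distrib[symmetric] add_divide_distrib[symmetric])
    have b1: "\<bar>Xf u p - Xf w p\<bar> \<le> \<bar>Qplus S A B d u p / P p\<bar> + \<bar>Qplus S A B w d p / P p\<bar>"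
      unfolding e1 by (rule abs_triangle_ineq)
    have "Yf u p - Yf w p = nu d p / P p"
      unfolding Yf_def d_def using nu_diff[OF ui wi, of p] by (simp add: diff_divide_distrib[symmetric])
    then have "\<bar>Yf u p - Yf w p\<bar> \<le> \<bar>nu d p\<bar>"
      using P1 by (simp add: abs_divide divide_le_eq mult_le_cancel_left1 abs_le_self_iff)
    also have "\<dots> \<le> c" unfolding c_def by (rule nu_bound[OF di])
    finally have b2: "\<bar>Yf u p - Yf w p\<bar> \<le> c" .
    have "\<bar>Phi u p - Phi w p\<bar> \<le> \<bar>Xf u p - Xf w p\<bar> / sn + Xf w p * \<bar>Yf u p - Yf w p\<bar> / sn\<^sup>2"
      unfolding Phi_def by (rule frac_alg[OF Good_X_nonneg[OF gw] Good_Y[OF gu] Good_Y[OF gw] sn0])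
    also have "\<dots> \<le> (\<bar>Qplus S A B d u p / P p\<bar> + \<bar>Qplus S A B w d p / P p\<bar>) / sn + Xf w p * c / sn\<^sup>2"
      by (intro add_mono divide_right_mono mult_left_mono b1 b2 Good_X_nonneg[OF gw]) (use sn0 in auto)
    finally show ?case .
  qed
  have i1: "integrable lborel (\<lambda>p. \<bar>Qplus S A B d u p / P p\<bar>)" using integrable_abs[OF QP_int(1)[OF di ui]] .
  have i2: "integrable lborel (\<lambda>p. \<bar>Qplus S A B w d p / P p\<bar>)" using integrable_abs[OF QP_int(1)[OF wi di]] .
  have i3: "integrable lborel (Xf w)" using Good_X_int(1)[OF gw] .
  have iphi: "integrable lborel (\<lambda>p. Phi u p - Phi w p)"
    using Good_Phi[OF gu] Good_Phi[OF gw] by (simp add: Good_def)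
  have ig: "integrable lborel (\<lambda>p. (\<bar>Qplus S A B d u p / P p\<bar> + \<bar>Qplus S A B w d p / P p\<bar>) / sn + Xf w p * c / sn\<^sup>2)"
    using i1 i2 i3 by (intro Bochner_Integration.integrable_add integrable_divide integrable_mult_left) auto
  have "L1norm (\<lambda>p. Phi u p - Phi w p) \<le> (LINT p|lborel. (\<bar>Qplus S A B d u p / P p\<bar> + \<bar>Qplus S A B w d p / P p\<bar>) / sn + Xf w p * c / sn\<^sup>2)"
    unfolding L1norm_def by (rule integral_mono_AE[OF integrable_abs[OF iphi] ig ae])
  also have "\<dots> = (L1norm (\<lambda>p. Qplus S A B d u p / P p) + L1norm (\<lambda>p. Qplus S A B w d p / P p)) / sn
      + (LINT p|lborel. Xf w p) * c / sn\<^sup>2"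
  proof -
    have "(LINT p|lborel. (\<bar>Qplus S A B d u p / P p\<bar> + \<bar>Qplus S A B w d p / P p\<bar>) / sn + Xf w p * c / sn\<^sup>2)
       = (LINT p|lborel. (\<bar>Qplus S A B d u p / P p\<bar> + \<bar>Qplus S A B w d p / P p\<bar>) / sn) + (LINT p|lborel. Xf w p * c / sn\<^sup>2)"
      by (rule Bochner_Integration.integral_add) (use i1 i2 i3 in \<open>intro Bochner_Integration.integrable_add integrable_divide integrable_mult_left; auto\<close>)+
    also have "(LINT p|lborel. (\<bar>Qplus S A B d u p / P p\<bar> + \<bar>Qplus S A B w d p / P p\<bar>) / sn)
        = (LINT p|lborel. \<bar>Qplus S A B d u p / P p\<bar> + \<bar>Qplus S A B w d p / P p\<bar>) / sn"
      by (rule integral_divide_zero)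
    also have "(LINT p|lborel. \<bar>Qplus S A B d u p / P p\<bar> + \<bar>Qplus S A B w d p / P p\<bar>)
        = L1norm (\<lambda>p. Qplus S A B d u p / P p) + L1norm (\<lambda>p. Qplus S A B w d p / P p)"
      unfolding L1norm_def by (rule Bochner_Integration.integral_add[OF i1 i2])
    also have "(LINT p|lborel. Xf w p * c / sn\<^sup>2) = (LINT p|lborel. Xf w p) * c / sn\<^sup>2"
      by (simp add: integral_divide_zero integral_mult_left_zero)
    finally show ?thesis .
  qed
  also have "\<dots> \<le> (kap * L1norm d * L1norm u + kap * L1norm w * L1norm d) / sn + (r + kap * r\<^sup>2) * c / sn"
  proof (rule add_mono)
    have "L1norm (\<lambda>p. Qplus S A B d u p / P p) + L1norm (\<lambda>p. Qplus S A B w d p / P p)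
        \<le> kap * L1norm d * L1norm u + kap * L1norm w * L1norm d"
      using QP_int(2)[OF di ui] QP_int(2)[OF wi di] by simp
    then show "(L1norm (\<lambda>p. Qplus S A B d u p / P p) + L1norm (\<lambda>p. Qplus S A B w d p / P p)) / sn
        \<le> (kap * L1norm d * L1norm u + kap * L1norm w * L1norm d) / sn"
      using sn0 by (simp add: divide_right_mono)
    have "(LINT p|lborel. Xf w p) = L1norm (Xf w)"
      unfolding L1norm_def by (rule Bochner_Integration.integral_cong) (use Good_X_nonneg[OF gw] in auto)
    then have x1: "(LINT p|lborel. Xf w p) \<le> r + kap * r\<^sup>2" using Good_X_int(2)[OF gw] by simp
    have x0: "0 \<le> (LINT p|lborel. Xf w p)" using Good_X_nonneg[OF gw] by (intro integral_nonneg_AE) auto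
    have s2: "sn \<le> sn\<^sup>2" using sn_ge1 by (simp add: power2_eq_square)
    have "(LINT p|lborel. Xf w p) * c / sn\<^sup>2 \<le> (LINT p|lborel. Xf w p) * c / sn"
      by (rule divide_left_mono[OF s2]) (use x0 c0 sn0 in auto)
    also have "\<dots> \<le> (r + kap * r\<^sup>2) * c / sn"
      by (intro divide_right_mono mult_right_mono x1 c0) (use sn0 in auto)
    finally show "(LINT p|lborel. Xf w p) * c / sn\<^sup>2 \<le> (r + kap * r\<^sup>2) * c / sn" .
  qed
  also have "\<dots> \<le> (kap * L1norm d * r + kap * r * L1norm d) / sn + (r + kap * r\<^sup>2) * c / sn"
    using ur wr kap_nonneg L1_nonneg[of d] sn0
    by (intro add_mono divide_right_mono) (auto intro!: mult_left_mono mult_right_mono mult_nonneg_nonneg)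
  also have "\<dots> = L1norm d * ((3 * kap * r + kap\<^sup>2 * r\<^sup>2) / sn)"
    unfolding c_def using sn0 by (simp add: power2_eq_square field_simps)
  also have "\<dots> \<le> L1norm d * (1/2)"
  proof (intro mult_left_mono L1_nonneg)
    have "2 * (3 * kap * r + kap\<^sup>2 * r\<^sup>2) \<le> sn" using sn_big by simp
    then show "(3 * kap * r + kap\<^sup>2 * r\<^sup>2) / sn \<le> 1/2" using sn0 by (simp add: divide_le_eq)
  qed
  finally show ?thesis unfolding d_def by simp
qed

definition it :: "nat \<Rightarrow> vec3 \<Rightarrow> real" where "it k = (Phi ^^ k) (\<lambda>_. 0)"

lemma Good_0: "Good (\<lambda>_. 0)"
  unfolding Good_def L1norm_def using r_pos by simp

lemma it_0: "it 0 = (\<lambda>_. 0)" by (simp add: it_def)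
lemma it_Suc: "it (Suc k) = Phi (it k)" by (simp add: it_def)

lemma Good_it: "Good (it k)"
  by (induction k) (simp_all add: it_0 it_Suc Good_0 Good_Phi)

lemma it_int: "integrable lborel (it k)" using Good_it[of k] by (simp add: Good_def)
lemma it_meas: "it k \<in> borel_measurable borel" using Good_meas[OF Good_it] .

definition "dst k = L1norm (\<lambda>p. it (Suc k) p - it k p)"

lemma dst_le: "dst k \<le> r * (1/2)^k"
proof (induction k)
  case 0
  show ?case using Good_it[of 1] by (simp add: dst_def it_0 Good_def)
next
  case (Suc k)
  have "dst (Suc k) = L1norm (\<lambda>p. Phi (it (Suc k)) p - Phi (it k) p)"
    by (simp add: dst_def it_Suc[of "Suc k"] it_Suc[of k])
  also have "\<dots> \<le> (1/2) * L1norm (\<lambda>p. it (Suc k) p - it k p)" by (rule contr[OF Good_it Good_it])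
  also have "\<dots> \<le> (1/2) * (r * (1/2)^k)" using Suc by (simp add: dst_def)
  finally show ?case by simp
qed

lemma geom_sum: "(\<Sum>i. r * (1/2)^(i + k)) = 2 * r * (1/2::real)^k"
proof -
  have "(\<Sum>i. r * (1/2)^(i + k)) = (\<Sum>i. (r * (1/2)^k) * (1/2::real)^i)"
    by (simp add: power_add mult_ac)
  also have "\<dots> = (r * (1/2)^k) * (\<Sum>i. (1/2::real)^i)"
    by (rule suminf_mult) (rule summable_geometric, simp)
  also have "\<dots> = 2 * r * (1/2)^k" by (simp add: suminf_geometric)
  finally show ?thesis .
qed

lemma sum_nn: "(\<integral>\<^sup>+p. (\<Sum>i. ennreal \<bar>it (Suc (i + k)) p - it (i + k) p\<bar>) \<partial>lborel) \<le> ennreal (2 * r * (1/2)^k)"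
proof -
  note [measurable] = it_meas
  have "(\<integral>\<^sup>+p. (\<Sum>i. ennreal \<bar>it (Suc (i + k)) p - it (i + k) p\<bar>) \<partial>lborel)
      = (\<Sum>i. \<integral>\<^sup>+p. ennreal \<bar>it (Suc (i + k)) p - it (i + k) p\<bar> \<partial>lborel)"
    by (rule nn_integral_suminf) measurable
  also have "\<dots> = (\<Sum>i. ennreal (dst (i + k)))"
    unfolding dst_def using it_int by (subst L1_nn) auto
  also have "\<dots> \<le> (\<Sum>i. ennreal (r * (1/2)^(i + k)))"
    by (intro suminf_le summableI ennreal_leI dst_le)
  also have "\<dots> = ennreal (\<Sum>i. r * (1/2)^(i + k))"
    by (rule suminf_ennreal2) (use r_pos in \<open>auto intro!: summable_mult summable_ignore_initial_segment[OF summable_geometric]\<close>)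
  also have "\<dots> = ennreal (2 * r * (1/2)^k)" by (simp add: geom_sum)
  finally show ?thesis .
qed

lemma ae_summable: "AE p in lborel. summable (\<lambda>i. \<bar>it (Suc i) p - it i p\<bar>)"
proof -
  note [measurable] = it_meas
  have "(\<integral>\<^sup>+p. (\<Sum>i. ennreal \<bar>it (Suc i) p - it i p\<bar>) \<partial>lborel) \<noteq> \<infinity>"
    using sum_nn[of 0] by (auto simp: top_unique)
  then have "AE p in lborel. (\<Sum>i. ennreal \<bar>it (Suc i) p - it i p\<bar>) \<noteq> \<infinity>"
    by (intro nn_integral_PInf_AE) measurable
  then show ?thesis
    by eventually_elim (rule summable_suminf_not_top, auto)
qed

definition "U p = max 0 (lim (\<lambda>k. it k p))"

lemma U_meas: "U \<in> borel_measurable borel"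
proof -
  note [measurable] = it_meas
  show ?thesis unfolding U_def[abs_def] by measurable
qed

lemma ae_U: "AE p in lborel. (\<lambda>k. it k p) \<longlonglongrightarrow> U p \<and> (\<forall>k. \<bar>U p - it k p\<bar> \<le> (\<Sum>i. \<bar>it (Suc (i + k)) p - it (i + k) p\<bar>))"
  using ae_summable
proof eventually_elim
  case (elim p)
  have c: "(\<lambda>k. it k p) \<longlonglongrightarrow> lim (\<lambda>k. it k p)" using tele(1)[OF elim] .
  have "0 \<le> lim (\<lambda>k. it k p)"
    using Good_it by (intro LIMSEQ_le_const[OF c]) (auto simp: Good_def)
  then have "U p = lim (\<lambda>k. it k p)" by (simp add: U_def)
  then show ?case using c tele(2)[OF elim] by simp
qed

lemma U_dist: "integrable lborel (\<lambda>p. U p - it k p)" "L1norm (\<lambda>p. U p - it k p) \<le> 2 * r * (1/2)^k"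
proof -
  note [measurable] = it_meas U_meas
  have m: "(\<lambda>p. U p - it k p) \<in> borel_measurable borel" by measurable
  have "(\<integral>\<^sup>+p. ennreal \<bar>U p - it k p\<bar> \<partial>lborel) \<le> (\<integral>\<^sup>+p. (\<Sum>i. ennreal \<bar>it (Suc (i + k)) p - it (i + k) p\<bar>) \<partial>lborel)"
  proof (rule nn_integral_mono_AE)
    show "AE p in lborel. ennreal \<bar>U p - it k p\<bar> \<le> (\<Sum>i. ennreal \<bar>it (Suc (i + k)) p - it (i + k) p\<bar>)"
      using ae_U ae_summable
    proof eventually_elim
      case (elim p)
      have s: "summable (\<lambda>i. \<bar>it (Suc (i + k)) p - it (i + k) p\<bar>)"
        using summable_ignore_initial_segment[OF elim(2), of k] by simp
      have "ennreal \<bar>U p - it k p\<bar> \<le> ennreal (\<Sum>i. \<bar>it (Suc (i + k)) p - it (i + k) p\<bar>)"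
        using elim(1) by (intro ennreal_leI) auto
      also have "\<dots> = (\<Sum>i. ennreal \<bar>it (Suc (i + k)) p - it (i + k) p\<bar>)"
        by (rule suminf_ennreal2[symmetric]) (use s in auto)
      finally show ?case .
    qed
  qed
  also have "\<dots> \<le> ennreal (2 * r * (1/2)^k)" by (rule sum_nn)
  finally have le: "(\<integral>\<^sup>+p. ennreal \<bar>U p - it k p\<bar> \<partial>lborel) \<le> ennreal (2 * r * (1/2)^k)" .
  have c: "0 \<le> 2 * r * (1/2::real)^k" using r_pos by simp
  show "integrable lborel (\<lambda>p. U p - it k p)" by (rule int_from_nn(1)[OF m c le])
  show "L1norm (\<lambda>p. U p - it k p) \<le> 2 * r * (1/2)^k" by (rule int_from_nn(2)[OF m c le])
qed

lemma U_int: "integrable lborel U"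
  using U_dist(1)[of 0] by (simp add: it_0)

lemma L1_minus_comm: "L1norm (\<lambda>p. f p - g p) = L1norm (\<lambda>p. g p - f p)"
  unfolding L1norm_def by (simp add: abs_minus_commute)

lemma Good_U: "Good U"
proof -
  have "L1norm U - r \<le> 2 * r * (1/2)^k" for k
  proof -
    have "L1norm U = L1norm (\<lambda>p. U p - 0)" by simp
    also have "\<dots> \<le> L1norm (\<lambda>p. U p - it k p) + L1norm (\<lambda>p. it k p - 0)"
      by (rule L1_diff_tri) (use U_int it_int in auto)
    also have "\<dots> \<le> 2 * r * (1/2)^k + r"
      using U_dist(2)[of k] Good_it[of k] by (simp add: Good_def)
    finally show ?thesis by simp
  qed
  then have "L1norm U - r \<le> 0" by (intro le_geom_zero[of _ "2 * r"]) (simp add: mult.assoc)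
  moreover have "0 \<le> U p" for p by (simp add: U_def)
  ultimately show ?thesis unfolding Good_def using U_int by simp
qed

lemma U_fix: "AE p in lborel. U p = Phi U p"
proof -
  have pui: "integrable lborel (Phi U)" using Good_Phi[OF Good_U] by (simp add: Good_def)
  have "L1norm (\<lambda>p. U p - Phi U p) \<le> 2 * r * (1/2)^k" for k
  proof -
    have "L1norm (\<lambda>p. U p - Phi U p) \<le> L1norm (\<lambda>p. U p - it (Suc k) p) + L1norm (\<lambda>p. it (Suc k) p - Phi U p)"
      by (rule L1_diff_tri) (use U_int it_int pui in auto)
    also have "L1norm (\<lambda>p. it (Suc k) p - Phi U p) = L1norm (\<lambda>p. Phi (it k) p - Phi U p)" by (simp add: it_Suc)
    also have "\<dots> \<le> (1/2) * L1norm (\<lambda>p. it k p - U p)" by (rule contr[OF Good_it Good_U])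
    also have "L1norm (\<lambda>p. it k p - U p) = L1norm (\<lambda>p. U p - it k p)" by (rule L1_minus_comm)
    finally have "L1norm (\<lambda>p. U p - Phi U p) \<le> 2 * r * (1/2)^(Suc k) + (1/2) * (2 * r * (1/2)^k)"
      using U_dist(2)[of "Suc k"] U_dist(2)[of k] by linarith
    then show ?thesis by simp
  qed
  then have "L1norm (\<lambda>p. U p - Phi U p) \<le> 0" by (intro le_geom_zero[of _ "2 * r"]) (simp add: mult.assoc)
  then have z: "L1norm (\<lambda>p. U p - Phi U p) = 0" using L1_nonneg by (simp add: order_antisym)
  have di: "integrable lborel (\<lambda>p. U p - Phi U p)" using U_int pui by simp
  have "AE p in lborel. \<bar>U p - Phi U p\<bar> = 0"
    using z integral_nonneg_eq_0_iff_AE[of lborel "\<lambda>p. \<bar>U p - Phi U p\<bar>"] di unfolding L1norm_def by auto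
  then show ?thesis by eventually_elim simp
qed

lemma exists_sol: "\<exists>u. Good u \<and> (AE p in lborel. sn * u p - Qcoll S A B u u p / P p = v p)"
proof (intro exI conjI)
  show "Good U" by (rule Good_U)
  show "AE p in lborel. sn * U p - Qcoll S A B U U p / P p = v p"
    using U_fix vp_ae
  proof eventually_elim
    case (elim p)
    have Y: "0 < Yf U p" using Good_Y[OF Good_U, of p] sn_ge1 by simp
    have "U p * Yf U p = Xf U p" using elim(1) Y by (simp add: Phi_def field_simps)
    then have "sn * U p + U p * nu U p / P p = vp p + Qplus S A B U U p / P p"
      by (simp add: Xf_def Yf_def algebra_simps)
    then show ?case using elim(2) p0_pos[of A B p] by (simp add: Qcoll_eq field_simps)
  qed
qed

end

theorem proposition3p2:
  fixes a b :: "real \<Rightarrow> real" and C\<^sub>o C\<^sub>1 t r :: real and S :: kernel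
  assumes Co_pos: "C\<^sub>o > 0"
    and a_lb: "\<And>s. a s > C\<^sub>o" and b_lb: "\<And>s. b s > C\<^sub>o"
    and S_meas: "\<And>\<alpha> \<beta>. (\<lambda>(p, q, p', q'). S \<alpha> \<beta> p q p' q') \<in> borel_measurable borel"
    and S_nonneg: "\<And>\<alpha> \<beta> p q p' q'. 0 \<le> S \<alpha> \<beta> p q p' q'"
    and S_bound: "\<And>\<alpha> \<beta> p q p' q'. S \<alpha> \<beta> p q p' q' \<le> C\<^sub>1"
    and S_sym: "\<And>\<alpha> \<beta> p q p' q'. S \<alpha> \<beta> p q p' q' = S \<alpha> \<beta> p' q' p q"
    and r_pos: "r > 0"
  shows "\<exists>n\<^sub>o::nat. n\<^sub>o > 0 \<and>
           (\<forall>n \<ge> n\<^sub>o. \<forall>v \<in> Xr r.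
              \<exists>u \<in> Xr r. solves S (a t) (b t) n v u \<and>
                 (\<forall>w \<in> Xr r. solves S (a t) (b t) n v w \<longrightarrow> (AE p in lborel. w p = u p)))"
proof -
  interpret Q: qs "a t" "b t" "C\<^sub>1" S
    by unfold_locales (use Co_pos a_lb[of t] b_lb[of t] S_meas S_nonneg S_bound S_sym in auto)
  define M where "M = 1 + 6 * Q.kap * r + 2 * Q.kap\<^sup>2 * r\<^sup>2"
  have M1: "1 \<le> M" unfolding M_def using Q.kap_nonneg r_pos by simp
  define n0 where "n0 = nat \<lceil>M\<^sup>2\<rceil> + 1"
  have n0pos: "n0 > 0" by (simp add: n0_def)
  have main: "\<exists>u \<in> Xr r. solves S (a t) (b t) n v u \<and>
                 (\<forall>w \<in> Xr r. solves S (a t) (b t) n v w \<longrightarrow> (AE p in lborel. w p = u p))"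
    if n: "n \<ge> n0" and v: "v \<in> Xr r" for n v
  proof -
    have "M\<^sup>2 \<le> real n"
    proof -
      have "M\<^sup>2 \<le> real (nat \<lceil>M\<^sup>2\<rceil>)" by linarith
      also have "\<dots> \<le> real n" using n unfolding n0_def by simp
      finally show ?thesis .
    qed
    then have "sqrt (M\<^sup>2) \<le> sqrt (real n)" by (rule real_sqrt_le_mono)
    then have snM: "M \<le> sqrt (real n)" using M1 by simp
    have vi: "integrable lborel v" and vae: "AE p in lborel. 0 \<le> v p" and vr: "L1norm v \<le> r"
      using v by (auto simp: Xr_def)
    interpret F: fp "a t" "b t" "C\<^sub>1" S r "sqrt (real n)" v
      by unfold_locales (use r_pos vi vae vr snM in \<open>auto simp: M_def\<close>)
    obtain u where gu: "F.Good u" and su: "AE p in lborel. sqrt (real n) * u p - Qcoll S (a t) (b t) u u p / p0 (a t) (b t) p = v p"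
      using F.exists_sol by blast
    have uX: "u \<in> Xr r" using gu unfolding F.Good_def Xr_def by auto
    show ?thesis
    proof (intro bexI[OF _ uX] conjI ballI impI)
      show "solves S (a t) (b t) n v u" unfolding solves_def using su .
      fix w assume wX: "w \<in> Xr r" and sw: "solves S (a t) (b t) n v w"
      show "AE p in lborel. w p = u p"
      proof (rule Q.uniq)
        show "integrable lborel u" "L1norm u \<le> r" using uX by (auto simp: Xr_def)
        show "integrable lborel w" "L1norm w \<le> r" using wX by (auto simp: Xr_def)
        show "4 * Q.kap * r < sqrt (real n)"
      proof -
        have "0 \<le> Q.kap * r" "0 \<le> 2 * Q.kap\<^sup>2 * r\<^sup>2" using Q.kap_nonneg r_pos by auto
        then show ?thesis using snM unfolding M_def by linarith
      qed
        show "AE p in lborel. sqrt (real n) * u p - Qcoll S (a t) (b t) u u p / p0 (a t) (b t) p = v p" using su .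
        show "AE p in lborel. sqrt (real n) * w p - Qcoll S (a t) (b t) w w p / p0 (a t) (b t) p = v p"
          using sw unfolding solves_def .
      qed
    qed
  qed
  show ?thesis using n0pos main by blast
qed

end
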